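(* Let $\mathcal{L}$ be a set of graphs with no sources (all of sort $\emptyset$). Then $\mathcal{L}$ is recognizable in the graph algebra $\mathbf{G}$ if and only if, for every finite set $\tau\subseteq\mathbb{S}$, $\mathcal{L}$ is recognizable in the algebra $\mathbf{G}^\tau$.
   Context: Fix a countably infinite set $\mathbb{S}$ of source labels and a finite set $\mathbb{A}$ of edge labels with arities $\ge1$. A graph of sort $\tau$ ($\tau\subseteq\mathbb{S}$ finite) is an isomorphism class of finite hypergraphs with $\mathbb{A}$-labelled edges (each edge attached to a sequence of vertices of length the arity of its label) together with an injective map from $\tau$ to the vertices ($s$-sources). The HR algebra $\mathbf{G}$ has the finite subsets of $\mathbb{S}$ as sorts, universe of sort $\tau$ the graphs of sort $\tau$, and operations: constants $\mathbf{0}_\tau$ (only sources from $\tau$), $\mathbf{a}_{(s_1,\ldots,s_{\#a})}$ (one $a$-edge attached to an $s_1$-,…, $s_{\#a}$-source); unary $\mathsf{restrict}_\tau$ (removes source labels outside $\tau$, keeping vertices; sort $\tau'\mapsto\tau\cap\tau'$); unary $\mathsf{rename}_\alpha$ for finite permutations $\alpha$ of $\mathbb{S}$ (source map $\xi\mapsto\xi\circ\alpha$, sort $\tau\mapsto\alpha^{-1}(\tau)$); binary $\parallel$ (disjoint union then fusion of sources with equal label). For finite $\tau$, $\mathbf{G}^\tau$ is the subalgebra with sorts the subsets of $\tau$, universe the graphs of sort $\subseteq\tau$, and operations $\mathbf{0}_{\tau'}$ ($\tau'\subseteq\tau$), $\mathbf{a}_{(s_1,\ldots)}$ ($s_i\in\tau$),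 $\mathsf{restrict}_{\tau'}$ ($\tau'\subseteq\tau$), $\mathsf{rename}_\alpha$ ($\alpha$ fixing every element outside $\tau$), $\parallel$. A set $L$ is recognizable in a many-sorted algebra $\mathbf{A}$ if there is a congruence on $\mathbf{A}$ (equivalence relating only elements of the same sort, compatible with all operations) with finitely many classes of each sort such that $L$ is a union of classes. *)

theory Defs
  imports Main
begin

text \<open>Source labels are natural numbers (a countably infinite set S = nat).
  Edge labels are the elements of a finite type 'a, with arity function ar.\<close>

record 'a cgraph =
  verts :: "nat set"
  edges :: "nat set"
  lab   :: "nat \<Rightarrow> 'a"
  att   :: "nat \<Rightarrow> nat list"
  src   :: "nat \<Rightarrow> nat option"

definition wf_cgraph :: "('a \<Rightarrow> nat) \<Rightarrow> 'a cgraph \<Rightarrow> bool" where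
  "wf_cgraph ar G \<longleftrightarrow>
     finite (verts G) \<and> finite (edges G) \<and>
     (\<forall>e\<in>edges G. length (att G e) = ar (lab G e) \<and> set (att G e) \<subseteq> verts G) \<and>
     finite (dom (src G)) \<and> inj_on (src G) (dom (src G)) \<and> ran (src G) \<subseteq> verts G"

definition cg_iso :: "'a cgraph \<Rightarrow> 'a cgraph \<Rightarrow> bool" where
  "cg_iso G H \<longleftrightarrow> (\<exists>f g. bij_betw f (verts G) (verts H) \<and> bij_betw g (edges G) (edges H) \<and>
     (\<forall>e\<in>edges G. lab H (g e) = lab G e \<and> att H (g e) = map f (att G e)) \<and>
     (\<forall>s. src H s = map_option f (src G s)))"

text \<open>A graph is an isomorphism class of well-formed concrete graphs.\<close>
definition iso_class :: "('a \<Rightarrow> nat) \<Rightarrow> 'a cgraph \<Rightarrow> 'a cgraph set" where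
  "iso_class ar G = {H. wf_cgraph ar H \<and> cg_iso G H}"

definition graphs :: "('a \<Rightarrow> nat) \<Rightarrow> 'a cgraph set set" where
  "graphs ar = iso_class ar ` {G. wf_cgraph ar G}"

definition rep :: "'a cgraph set \<Rightarrow> 'a cgraph" where
  "rep C = (SOME G. G \<in> C)"

definition gsort :: "'a cgraph set \<Rightarrow> nat set" where
  "gsort C = dom (src (rep C))"

definition c_restrict :: "nat set \<Rightarrow> 'a cgraph \<Rightarrow> 'a cgraph" where
  "c_restrict \<tau> G = G\<lparr>src := src G |` \<tau>\<rparr>"

definition c_rename :: "(nat \<Rightarrow> nat) \<Rightarrow> 'a cgraph \<Rightarrow> 'a cgraph" where
  "c_rename \<alpha> G = G\<lparr>src := src G \<circ> \<alpha>\<rparr>"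

text \<open>Parallel composition: vertices of G become 2v, vertices of H become 2v+1,
  except that an s-source of H is identified with the s-source of G when both exist.\<close>
definition par_vmap :: "'a cgraph \<Rightarrow> 'a cgraph \<Rightarrow> nat \<Rightarrow> nat" where
  "par_vmap G H v =
     (if \<exists>s. src H s = Some v \<and> s \<in> dom (src G)
      then 2 * the (src G (SOME s. src H s = Some v \<and> s \<in> dom (src G)))
      else 2 * v + 1)"

definition c_par :: "'a cgraph \<Rightarrow> 'a cgraph \<Rightarrow> 'a cgraph" where
  "c_par G H = \<lparr> verts = (\<lambda>v. 2 * v) ` verts G \<union> par_vmap G H ` verts H,
                 edges = (\<lambda>e. 2 * e) ` edges G \<union> (\<lambda>e. 2 * e + 1) ` edges H,
                 lab = (\<lambda>e. if even e then lab G (e div 2) else lab H (e div 2)),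
                 att = (\<lambda>e. if even e then map (\<lambda>v. 2 * v) (att G (e div 2))
                           else map (par_vmap G H) (att H (e div 2))),
                 src = (\<lambda>s. case src G s of Some v \<Rightarrow> Some (2 * v)
                                       | None \<Rightarrow> map_option (par_vmap G H) (src H s)) \<rparr>"

definition g_restrict :: "('a \<Rightarrow> nat) \<Rightarrow> nat set \<Rightarrow> 'a cgraph set \<Rightarrow> 'a cgraph set" where
  "g_restrict ar \<tau> C = iso_class ar (c_restrict \<tau> (rep C))"

definition g_rename :: "('a \<Rightarrow> nat) \<Rightarrow> (nat \<Rightarrow> nat) \<Rightarrow> 'a cgraph set \<Rightarrow> 'a cgraph set" where
  "g_rename ar \<alpha> C = iso_class ar (c_rename \<alpha> (rep C))"

definition g_par :: "('a \<Rightarrow> nat) \<Rightarrow> 'a cgraph set \<Rightarrow> 'a cgraph set \<Rightarrow> 'a cgraph set" where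
  "g_par ar C D = iso_class ar (c_par (rep C) (rep D))"

definition finperm :: "(nat \<Rightarrow> nat) \<Rightarrow> bool" where
  "finperm \<alpha> \<longleftrightarrow> bij \<alpha> \<and> finite {s. \<alpha> s \<noteq> s}"

text \<open>A congruence on the (sub)algebra with universe U, restriction operations indexed
  by Rst, renaming operations indexed by Perm, and parallel composition; constants
  impose no compatibility condition.\<close>
definition hr_congruence ::
  "('a \<Rightarrow> nat) \<Rightarrow> 'a cgraph set set \<Rightarrow> nat set set \<Rightarrow> (nat \<Rightarrow> nat) set
   \<Rightarrow> ('a cgraph set \<times> 'a cgraph set) set \<Rightarrow> bool" where
  "hr_congruence ar U Rst Perm R \<longleftrightarrow>
     equiv U R \<and>
     (\<forall>(x, y)\<in>R. gsort x = gsort y) \<and>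
     (\<forall>\<tau>\<in>Rst. \<forall>(x, y)\<in>R. (g_restrict ar \<tau> x, g_restrict ar \<tau> y) \<in> R) \<and>
     (\<forall>\<alpha>\<in>Perm. \<forall>(x, y)\<in>R. (g_rename ar \<alpha> x, g_rename ar \<alpha> y) \<in> R) \<and>
     (\<forall>(x, y)\<in>R. \<forall>(x', y')\<in>R. (g_par ar x x', g_par ar y y') \<in> R) \<and>
     (\<forall>\<sigma>. finite ({x\<in>U. gsort x = \<sigma>} // R))"

definition recognizable_in ::
  "('a \<Rightarrow> nat) \<Rightarrow> 'a cgraph set set \<Rightarrow> nat set set \<Rightarrow> (nat \<Rightarrow> nat) set
   \<Rightarrow> 'a cgraph set set \<Rightarrow> bool" where
  "recognizable_in ar U Rst Perm L \<longleftrightarrow>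
     (\<exists>R. hr_congruence ar U Rst Perm R \<and> L \<subseteq> U \<and> (\<forall>(x, y)\<in>R. x \<in> L \<longrightarrow> y \<in> L))"

definition recognizable_G :: "('a \<Rightarrow> nat) \<Rightarrow> 'a cgraph set set \<Rightarrow> bool" where
  "recognizable_G ar L =
     recognizable_in ar (graphs ar) {\<tau>. finite \<tau>} {\<alpha>. finperm \<alpha>} L"

definition recognizable_Gtau :: "('a \<Rightarrow> nat) \<Rightarrow> nat set \<Rightarrow> 'a cgraph set set \<Rightarrow> bool" where
  "recognizable_Gtau ar \<tau> L =
     recognizable_in ar {x\<in>graphs ar. gsort x \<subseteq> \<tau>} (Pow \<tau>)
       {\<alpha>. finperm \<alpha> \<and> (\<forall>s. s \<notin> \<tau> \<longrightarrow> \<alpha> s = s)} L"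

end

theory Submission
  imports Defs
begin
definition iso_maps :: "'a cgraph \<Rightarrow> 'a cgraph \<Rightarrow> (nat\<Rightarrow>nat) \<Rightarrow> (nat\<Rightarrow>nat) \<Rightarrow> bool" where
 "iso_maps G H f g \<longleftrightarrow> bij_betw f (verts G) (verts H) \<and> bij_betw g (edges G) (edges H) \<and>
     (\<forall>e\<in>edges G. lab H (g e) = lab G e \<and> att H (g e) = map f (att G e)) \<and>
     (\<forall>s. src H s = map_option f (src G s))"

lemma cg_iso_maps: "cg_iso G H \<longleftrightarrow> (\<exists>f g. iso_maps G H f g)"
  unfolding cg_iso_def iso_maps_def by blast

lemma iso_maps_refl: "iso_maps G G id id"
  by (simp add: iso_maps_def option.map_id)

lemma cg_iso_refl: "cg_iso G G"
  using iso_maps_refl cg_iso_maps by blast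

lemma iso_maps_trans: "iso_maps G H f g \<Longrightarrow> iso_maps H K f' g' \<Longrightarrow> iso_maps G K (f' \<circ> f) (g' \<circ> g)"
  unfolding iso_maps_def
  apply (intro conjI)
     apply (blast intro: bij_betw_trans)
    apply (blast intro: bij_betw_trans)
   apply (metis (no_types, lifting) bij_betw_apply comp_apply list.map_comp)
  apply (simp add: option.map_comp)
  done

lemma cg_iso_trans: "cg_iso G H \<Longrightarrow> cg_iso H K \<Longrightarrow> cg_iso G K"
  using iso_maps_trans cg_iso_maps by metis

lemma wf_att: "wf_cgraph ar G \<Longrightarrow> e \<in> edges G \<Longrightarrow> set (att G e) \<subseteq> verts G"
  by (simp add: wf_cgraph_def)
lemma wf_len: "wf_cgraph ar G \<Longrightarrow> e \<in> edges G \<Longrightarrow> length (att G e) = ar (lab G e)"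
  by (simp add: wf_cgraph_def)
lemma wf_src: "wf_cgraph ar G \<Longrightarrow> src G s = Some v \<Longrightarrow> v \<in> verts G"
  unfolding wf_cgraph_def by (auto intro: ranI)
lemma wf_inj: "wf_cgraph ar G \<Longrightarrow> src G s = Some v \<Longrightarrow> src G t = Some v \<Longrightarrow> s = t"
  unfolding wf_cgraph_def inj_on_def by (metis domI)
lemma wf_fin: "wf_cgraph ar G \<Longrightarrow> finite (dom (src G))"
  by (simp add: wf_cgraph_def)

lemma iso_maps_sym:
  assumes w: "wf_cgraph ar G" and i: "iso_maps G H f g"
  shows "iso_maps H G (inv_into (verts G) f) (inv_into (edges G) g)"
proof -
  have bf: "bij_betw f (verts G) (verts H)" and bg: "bij_betw g (edges G) (edges H)"
    and le: "\<forall>e\<in>edges G. lab H (g e) = lab G e \<and> att H (g e) = map f (att G e)"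
    and sr: "\<forall>s. src H s = map_option f (src G s)" using i unfolding iso_maps_def by auto
  have invf: "\<And>v. v \<in> verts G \<Longrightarrow> inv_into (verts G) f (f v) = v"
    using bf by (simp add: bij_betw_def inv_into_f_f)
  show ?thesis unfolding iso_maps_def
  proof (intro conjI ballI allI)
    show "bij_betw (inv_into (verts G) f) (verts H) (verts G)" using bf by (rule bij_betw_inv_into)
    show "bij_betw (inv_into (edges G) g) (edges H) (edges G)" using bg by (rule bij_betw_inv_into)
    fix e assume e: "e \<in> edges H"
    define e0 where "e0 = inv_into (edges G) g e"
    have e0: "e0 \<in> edges G" "g e0 = e" using bg e unfolding e0_def
      by (auto simp: bij_betw_def inv_into_into f_inv_into_f)
    show "lab G (inv_into (edges G) g e) = lab H e" using le e0 unfolding e0_def by metis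
    have "map (inv_into (verts G) f) (att H e) = map (inv_into (verts G) f \<circ> f) (att G e0)"
      using le e0 by auto
    also have "\<dots> = att G e0" using wf_att[OF w e0(1)] invf by (intro map_idI) auto
    finally show "att G (inv_into (edges G) g e) = map (inv_into (verts G) f) (att H e)"
      unfolding e0_def by simp
  next
    fix s show "src G s = map_option (inv_into (verts G) f) (src H s)"
      using sr invf wf_src[OF w] by (cases "src G s") auto
  qed
qed

lemma cg_iso_sym: "wf_cgraph ar G \<Longrightarrow> cg_iso G H \<Longrightarrow> cg_iso H G"
  using iso_maps_sym cg_iso_maps by metis

lemma iso_class_eq:
  assumes "wf_cgraph ar G" "wf_cgraph ar G'"
  shows "iso_class ar G = iso_class ar G' \<longleftrightarrow> cg_iso G G'"
proof
  assume "iso_class ar G = iso_class ar G'"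
  moreover have "G' \<in> iso_class ar G'" using assms cg_iso_refl by (simp add: iso_class_def)
  ultimately have "G' \<in> iso_class ar G" by simp
  thus "cg_iso G G'" by (simp add: iso_class_def)
next
  assume c: "cg_iso G G'"
  have c': "cg_iso G' G" using cg_iso_sym[OF assms(1) c] .
  show "iso_class ar G = iso_class ar G'"
    unfolding iso_class_def using c c' cg_iso_trans by blast
qed

lemma rep_iso:
  assumes "wf_cgraph ar G"
  shows "wf_cgraph ar (rep (iso_class ar G)) \<and> cg_iso G (rep (iso_class ar G))"
proof -
  have "G \<in> iso_class ar G" using assms cg_iso_refl by (simp add: iso_class_def)
  hence "rep (iso_class ar G) \<in> iso_class ar G" unfolding rep_def by (rule someI)
  thus ?thesis by (simp add: iso_class_def)
qed

lemma graphsE: "x \<in> graphs ar \<Longrightarrow> (\<And>G. wf_cgraph ar G \<Longrightarrow> x = iso_class ar G \<Longrightarrow> P) \<Longrightarrow> P"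
  unfolding graphs_def by auto

lemma graphsI: "wf_cgraph ar G \<Longrightarrow> iso_class ar G \<in> graphs ar"
  unfolding graphs_def by auto

lemma iso_dom: "iso_maps G H f g \<Longrightarrow> dom (src H) = dom (src G)"
  unfolding iso_maps_def by auto

lemma gsort_iso_class: "wf_cgraph ar G \<Longrightarrow> gsort (iso_class ar G) = dom (src G)"
  unfolding gsort_def using rep_iso iso_dom cg_iso_maps by metis

lemma wf_restrict: 
  assumes "wf_cgraph ar G" shows "wf_cgraph ar (c_restrict \<tau> G)"
proof -
  have "finite (dom (src G |` \<tau>))" using assms by (simp add: wf_cgraph_def)
  moreover have "inj_on (src G |` \<tau>) (dom (src G |` \<tau>))"
  proof (rule inj_onI)
    fix x y assume "x \<in> dom (src G |` \<tau>)" "y \<in> dom (src G |` \<tau>)" "(src G |` \<tau>) x = (src G |` \<tau>) y"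
    then obtain v where "src G x = Some v" "src G y = Some v"
      by (auto simp: restrict_map_def split: if_splits)
    thus "x = y" using wf_inj[OF assms] by blast
  qed
  moreover have "ran (src G |` \<tau>) \<subseteq> verts G"
  proof
    fix v assume "v \<in> ran (src G |` \<tau>)"
    then obtain x where "(src G |` \<tau>) x = Some v" by (auto simp: ran_def)
    hence "src G x = Some v" by (auto simp: restrict_map_def split: if_splits)
    thus "v \<in> verts G" using wf_src[OF assms] by blast
  qed
  moreover have e: "verts (c_restrict \<tau> G) = verts G" "edges (c_restrict \<tau> G) = edges G"
    "lab (c_restrict \<tau> G) = lab G" "att (c_restrict \<tau> G) = att G"
    "src (c_restrict \<tau> G) = src G |` \<tau>" by (simp_all add: c_restrict_def)
  moreover have "finite (verts G)" "finite (edges G)"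
    "\<forall>e\<in>edges G. length (att G e) = ar (lab G e) \<and> set (att G e) \<subseteq> verts G"
    using assms unfolding wf_cgraph_def by blast+
  ultimately show ?thesis unfolding wf_cgraph_def by presburger
qed

lemma iso_restrict: "iso_maps G H f g \<Longrightarrow> iso_maps (c_restrict \<tau> G) (c_restrict \<tau> H) f g"
  unfolding iso_maps_def c_restrict_def by (auto simp: restrict_map_def)

lemma wf_rename:
  assumes w: "wf_cgraph ar G" and b: "bij \<alpha>"
  shows "wf_cgraph ar (c_rename \<alpha> G)"
proof -
  have d: "dom (src G \<circ> \<alpha>) = \<alpha> -` dom (src G)" by auto
  have "finite (\<alpha> -` dom (src G))" using wf_fin[OF w] b
    by (intro finite_vimageI) (auto simp: bij_def)
  hence "finite (dom (src G \<circ> \<alpha>))" using d by simp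
  moreover have "inj_on (src G \<circ> \<alpha>) (dom (src G \<circ> \<alpha>))"
  proof (rule inj_onI)
    fix x y assume "x \<in> dom (src G \<circ> \<alpha>)" "y \<in> dom (src G \<circ> \<alpha>)" "(src G \<circ> \<alpha>) x = (src G \<circ> \<alpha>) y"
    then obtain v where "src G (\<alpha> x) = Some v" "src G (\<alpha> y) = Some v" by auto
    hence "\<alpha> x = \<alpha> y" using wf_inj[OF w] by blast
    thus "x = y" using b by (simp add: bij_def inj_eq)
  qed
  moreover have "ran (src G \<circ> \<alpha>) \<subseteq> verts G"
  proof
    fix v assume "v \<in> ran (src G \<circ> \<alpha>)"
    then obtain x where "src G (\<alpha> x) = Some v" by (auto simp: ran_def)
    thus "v \<in> verts G" using wf_src[OF w] by blast
  qed
  moreover have e: "verts (c_rename \<alpha> G) = verts G" "edges (c_rename \<alpha> G) = edges G"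
    "lab (c_rename \<alpha> G) = lab G" "att (c_rename \<alpha> G) = att G"
    "src (c_rename \<alpha> G) = src G \<circ> \<alpha>" by (simp_all add: c_rename_def)
  moreover have "finite (verts G)" "finite (edges G)"
    "\<forall>e\<in>edges G. length (att G e) = ar (lab G e) \<and> set (att G e) \<subseteq> verts G"
    using w unfolding wf_cgraph_def by blast+
  ultimately show ?thesis unfolding wf_cgraph_def by presburger
qed

lemma iso_rename: "iso_maps G H f g \<Longrightarrow> iso_maps (c_rename \<alpha> G) (c_rename \<alpha> H) f g"
  unfolding iso_maps_def c_rename_def by auto

lemma cg_iso_restrict: "cg_iso G H \<Longrightarrow> cg_iso (c_restrict \<tau> G) (c_restrict \<tau> H)"
  using iso_restrict cg_iso_maps by metis
lemma cg_iso_rename: "cg_iso G H \<Longrightarrow> cg_iso (c_rename \<alpha> G) (c_rename \<alpha> H)"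
  using iso_rename cg_iso_maps by metis

lemma g_restrict_cls:
  assumes "wf_cgraph ar G"
  shows "g_restrict ar \<tau> (iso_class ar G) = iso_class ar (c_restrict \<tau> G)"
proof -
  let ?R = "rep (iso_class ar G)"
  have "wf_cgraph ar ?R" "cg_iso ?R G" using rep_iso[OF assms] cg_iso_sym[OF assms] by blast+
  thus ?thesis unfolding g_restrict_def
    by (simp add: iso_class_eq wf_restrict assms cg_iso_restrict)
qed

lemma g_rename_cls:
  assumes "wf_cgraph ar G" "bij \<alpha>"
  shows "g_rename ar \<alpha> (iso_class ar G) = iso_class ar (c_rename \<alpha> G)"
proof -
  let ?R = "rep (iso_class ar G)"
  have "wf_cgraph ar ?R" "cg_iso ?R G" using rep_iso[OF assms(1)] cg_iso_sym[OF assms(1)] by blast+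
  thus ?thesis unfolding g_rename_def
    by (simp add: iso_class_eq wf_rename assms cg_iso_rename)
qed

definition pair :: "'b \<Rightarrow> 'b \<Rightarrow> nat \<Rightarrow> 'b" where
  "pair a b = (\<lambda>i. if i = 0 then a else b)"
definition trip :: "'b \<Rightarrow> 'b \<Rightarrow> 'b \<Rightarrow> nat \<Rightarrow> 'b" where
  "trip a b c = (\<lambda>i. if i = 0 then a else if i = 1 then b else c)"

lemma pair_simps[simp]: "pair a b 0 = a" "pair a b (Suc 0) = b"
  by (simp_all add: pair_def)
lemma trip_simps[simp]: "trip a b c 0 = a" "trip a b c (Suc 0) = b" "trip a b c 2 = c"
  by (simp_all add: trip_def)

definition gcore :: "nat set \<Rightarrow> (nat \<Rightarrow> 'a cgraph) \<Rightarrow> 'a cgraph \<Rightarrow> (nat \<Rightarrow> nat \<Rightarrow> nat) \<Rightarrow> (nat \<Rightarrow> nat \<Rightarrow> nat) \<Rightarrow> bool" where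
"gcore I Gs K F P \<longleftrightarrow>
  verts K = (\<Union>i\<in>I. F i ` verts (Gs i)) \<and>
  (\<forall>i\<in>I. \<forall>j\<in>I. \<forall>v\<in>verts (Gs i). \<forall>w\<in>verts (Gs j).
      F i v = F j w \<longleftrightarrow> (i = j \<and> v = w) \<or> (\<exists>s. src (Gs i) s = Some v \<and> src (Gs j) s = Some w)) \<and>
  edges K = (\<Union>i\<in>I. P i ` edges (Gs i)) \<and>
  (\<forall>i\<in>I. \<forall>j\<in>I. \<forall>e\<in>edges (Gs i). \<forall>e'\<in>edges (Gs j). P i e = P j e' \<longleftrightarrow> (i = j \<and> e = e')) \<and>
  (\<forall>i\<in>I. \<forall>e\<in>edges (Gs i). lab K (P i e) = lab (Gs i) e \<and> att K (P i e) = map (F i) (att (Gs i) e))"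

definition gsrc :: "nat set \<Rightarrow> (nat \<Rightarrow> 'a cgraph) \<Rightarrow> 'a cgraph \<Rightarrow> (nat \<Rightarrow> nat \<Rightarrow> nat) \<Rightarrow> bool" where
"gsrc I Gs K F \<longleftrightarrow>
  (\<forall>s. \<forall>i\<in>I. \<forall>v. src (Gs i) s = Some v \<longrightarrow> src K s = Some (F i v)) \<and>
  (\<forall>s. (\<forall>i\<in>I. src (Gs i) s = None) \<longrightarrow> src K s = None)"

lemma transfer_bij:
  assumes c: "\<forall>i\<in>I. \<forall>j\<in>I. \<forall>v\<in>A i. \<forall>w\<in>A j. (F i v = F j w \<longleftrightarrow> F' i v = F' j w)"
  shows "\<exists>\<phi>. bij_betw \<phi> (\<Union>i\<in>I. F i ` A i) (\<Union>i\<in>I. F' i ` A i) \<and> (\<forall>i\<in>I. \<forall>v\<in>A i. \<phi> (F i v) = F' i v)"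
proof -
  define \<phi> where "\<phi> u = (SOME u'. \<exists>i\<in>I. \<exists>v\<in>A i. u = F i v \<and> u' = F' i v)" for u
  have \<phi>: "\<phi> (F i v) = F' i v" if "i\<in>I" "v\<in>A i" for i v
    unfolding \<phi>_def
    apply (rule someI2[where a="F' i v"])
    using that apply blast
  proof (elim bexE conjE)
    fix u' j w assume h: "j \<in> I" "w \<in> A j" "F i v = F j w" "u' = F' j w"
    have "F' i v = F' j w" using c[rule_format, OF that(1) h(1) that(2) h(2)] h(3) by simp
    thus "u' = F' i v" using h(4) by simp
  qed
  define \<psi> where "\<psi> u = (SOME u'. \<exists>i\<in>I. \<exists>v\<in>A i. u = F' i v \<and> u' = F i v)" for u
  have \<psi>: "\<psi> (F' i v) = F i v" if "i\<in>I" "v\<in>A i" for i v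
    unfolding \<psi>_def
    apply (rule someI2[where a="F i v"])
    using that apply blast
  proof (elim bexE conjE)
    fix u' j w assume h: "j \<in> I" "w \<in> A j" "F' i v = F' j w" "u' = F j w"
    have "F i v = F j w" using c[rule_format, OF that(1) h(1) that(2) h(2)] h(3) by simp
    thus "u' = F i v" using h(4) by simp
  qed
  show ?thesis
    apply (rule exI[of _ \<phi>], rule conjI)
     apply (rule bij_betw_byWitness[where f'=\<psi>])
    using \<phi> \<psi> by auto
qed

lemma gcoreD:
  assumes "gcore I Gs K F P"
  shows "verts K = (\<Union>i\<in>I. F i ` verts (Gs i))"
    "\<And>i j v w. i\<in>I \<Longrightarrow> j\<in>I \<Longrightarrow> v\<in>verts (Gs i) \<Longrightarrow> w\<in>verts (Gs j) \<Longrightarrow>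
      F i v = F j w \<longleftrightarrow> (i = j \<and> v = w) \<or> (\<exists>s. src (Gs i) s = Some v \<and> src (Gs j) s = Some w)"
    "edges K = (\<Union>i\<in>I. P i ` edges (Gs i))"
    "\<And>i j e e'. i\<in>I \<Longrightarrow> j\<in>I \<Longrightarrow> e\<in>edges (Gs i) \<Longrightarrow> e'\<in>edges (Gs j) \<Longrightarrow> P i e = P j e' \<longleftrightarrow> (i = j \<and> e = e')"
    "\<And>i e. i\<in>I \<Longrightarrow> e\<in>edges (Gs i) \<Longrightarrow> lab K (P i e) = lab (Gs i) e"
    "\<And>i e. i\<in>I \<Longrightarrow> e\<in>edges (Gs i) \<Longrightarrow> att K (P i e) = map (F i) (att (Gs i) e)"
proof -
  note c = assms[unfolded gcore_def]
  show "verts K = (\<Union>i\<in>I. F i ` verts (Gs i))" using c by (rule conjunct1)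
  show "\<And>i j v w. i\<in>I \<Longrightarrow> j\<in>I \<Longrightarrow> v\<in>verts (Gs i) \<Longrightarrow> w\<in>verts (Gs j) \<Longrightarrow>
      F i v = F j w \<longleftrightarrow> (i = j \<and> v = w) \<or> (\<exists>s. src (Gs i) s = Some v \<and> src (Gs j) s = Some w)"
    by (rule c[THEN conjunct2, THEN conjunct1, rule_format])
  show "edges K = (\<Union>i\<in>I. P i ` edges (Gs i))"
    by (rule c[THEN conjunct2, THEN conjunct2, THEN conjunct1])
  show "\<And>i j e e'. i\<in>I \<Longrightarrow> j\<in>I \<Longrightarrow> e\<in>edges (Gs i) \<Longrightarrow> e'\<in>edges (Gs j) \<Longrightarrow> P i e = P j e' \<longleftrightarrow> (i = j \<and> e = e')"
    by (rule c[THEN conjunct2, THEN conjunct2, THEN conjunct2, THEN conjunct1, rule_format])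
  show "\<And>i e. i\<in>I \<Longrightarrow> e\<in>edges (Gs i) \<Longrightarrow> lab K (P i e) = lab (Gs i) e"
    using c[THEN conjunct2, THEN conjunct2, THEN conjunct2, THEN conjunct2] by blast
  show "\<And>i e. i\<in>I \<Longrightarrow> e\<in>edges (Gs i) \<Longrightarrow> att K (P i e) = map (F i) (att (Gs i) e)"
    using c[THEN conjunct2, THEN conjunct2, THEN conjunct2, THEN conjunct2] by blast
qed

lemma gsrcD:
  assumes "gsrc I Gs K F"
  shows "\<And>s i v. i\<in>I \<Longrightarrow> src (Gs i) s = Some v \<Longrightarrow> src K s = Some (F i v)"
    "\<And>s. (\<forall>i\<in>I. src (Gs i) s = None) \<Longrightarrow> src K s = None"
  using assms unfolding gsrc_def by simp_all

lemma gcore_unique: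
  assumes g1: "gcore I Gs K F P" and g2: "gcore I Gs K' F' P'" and w: "\<forall>i\<in>I. wf_cgraph ar (Gs i)"
  shows "\<exists>\<phi> \<psi>. bij_betw \<phi> (verts K) (verts K') \<and> bij_betw \<psi> (edges K) (edges K') \<and>
     (\<forall>i\<in>I. \<forall>v\<in>verts (Gs i). \<phi> (F i v) = F' i v) \<and>
     (\<forall>e\<in>edges K. lab K' (\<psi> e) = lab K e \<and> att K' (\<psi> e) = map \<phi> (att K e))"
proof -
  have "\<forall>i\<in>I. \<forall>j\<in>I. \<forall>v\<in>verts (Gs i). \<forall>w\<in>verts (Gs j). (F i v = F j w \<longleftrightarrow> F' i v = F' j w)"
    using gcoreD(2)[OF g1] gcoreD(2)[OF g2] by blast
  from transfer_bij[OF this] obtain \<phi> where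
    \<phi>: "bij_betw \<phi> (verts K) (verts K')" "\<forall>i\<in>I. \<forall>v\<in>verts (Gs i). \<phi> (F i v) = F' i v"
    unfolding gcoreD(1)[OF g1, symmetric] gcoreD(1)[OF g2, symmetric] by blast
  have "\<forall>i\<in>I. \<forall>j\<in>I. \<forall>v\<in>edges (Gs i). \<forall>w\<in>edges (Gs j). (P i v = P j w \<longleftrightarrow> P' i v = P' j w)"
    using gcoreD(4)[OF g1] gcoreD(4)[OF g2] by blast
  from transfer_bij[OF this] obtain \<psi> where
    \<psi>: "bij_betw \<psi> (edges K) (edges K')" "\<forall>i\<in>I. \<forall>v\<in>edges (Gs i). \<psi> (P i v) = P' i v"
    unfolding gcoreD(3)[OF g1, symmetric] gcoreD(3)[OF g2, symmetric] by blast
  have "\<forall>e\<in>edges K. lab K' (\<psi> e) = lab K e \<and> att K' (\<psi> e) = map \<phi> (att K e)"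
  proof
    fix e assume "e \<in> edges K"
    then obtain i e0 where i: "i \<in> I" "e0 \<in> edges (Gs i)" "e = P i e0" using gcoreD(3)[OF g1] by blast
    have a: "set (att (Gs i) e0) \<subseteq> verts (Gs i)" using wf_att w i by blast
    have "map \<phi> (att K e) = map (\<lambda>v. \<phi> (F i v)) (att (Gs i) e0)"
      using gcoreD(6)[OF g1 i(1,2)] i(3) by simp
    also have "\<dots> = map (F' i) (att (Gs i) e0)" using a \<phi>(2) i(1) by (intro map_cong) auto
    finally show "lab K' (\<psi> e) = lab K e \<and> att K' (\<psi> e) = map \<phi> (att K e)"
      using gcoreD(5,6)[OF g1 i(1,2)] gcoreD(5,6)[OF g2 i(1,2)] \<psi>(2) i by simp
  qed
  thus ?thesis using \<phi> \<psi> by blast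
qed

lemma gluing_iso:
  assumes g1: "gcore I Gs K F P" "gsrc I Gs K F" and g2: "gcore I Gs K' F' P'" "gsrc I Gs K' F'"
    and w: "\<forall>i\<in>I. wf_cgraph ar (Gs i)"
  shows "cg_iso K K'"
proof -
  obtain \<phi> \<psi> where u: "bij_betw \<phi> (verts K) (verts K')" "bij_betw \<psi> (edges K) (edges K')"
     "\<forall>i\<in>I. \<forall>v\<in>verts (Gs i). \<phi> (F i v) = F' i v"
     "\<forall>e\<in>edges K. lab K' (\<psi> e) = lab K e \<and> att K' (\<psi> e) = map \<phi> (att K e)"
    using gcore_unique[OF g1(1) g2(1) w] by blast
  have "src K' s = map_option \<phi> (src K s)" for s
  proof (cases "\<exists>i\<in>I. src (Gs i) s \<noteq> None")
    case True
    then obtain i v where i: "i \<in> I" "src (Gs i) s = Some v" by auto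
    have "v \<in> verts (Gs i)" using wf_src w i by blast
    thus ?thesis using gsrcD(1)[OF g1(2) i] gsrcD(1)[OF g2(2) i] u(3) i by simp
  next
    case False
    thus ?thesis using gsrcD(2)[OF g1(2)] gsrcD(2)[OF g2(2)] by simp
  qed
  thus ?thesis unfolding cg_iso_def
    apply -
    apply (rule exI[of _ \<phi>], rule exI[of _ \<psi>])
    using u by blast
qed

lemma glue0_iso:
  assumes g1: "gcore I Gs K F P" "src K = Map.empty" and g2: "gcore I Gs K' F' P'" "src K' = Map.empty"
    and w: "\<forall>i\<in>I. wf_cgraph ar (Gs i)"
  shows "cg_iso K K'"
proof -
  obtain \<phi> \<psi> where u: "bij_betw \<phi> (verts K) (verts K')" "bij_betw \<psi> (edges K) (edges K')"
     "\<forall>e\<in>edges K. lab K' (\<psi> e) = lab K e \<and> att K' (\<psi> e) = map \<phi> (att K e)"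
    using gcore_unique[OF g1(1) g2(1) w] by blast
  show ?thesis unfolding cg_iso_def
    apply (rule exI[of _ \<phi>], rule exI[of _ \<psi>])
    using u g1(2) g2(2) by simp
qed

lemma gsrc_ex:
  assumes "gsrc I Gs K F" "src K s \<noteq> None"
  shows "\<exists>i\<in>I. \<exists>v. src (Gs i) s = Some v"
proof (rule ccontr)
  assume "\<not> ?thesis"
  hence "\<forall>i\<in>I. src (Gs i) s = None" by auto
  hence "src K s = None" by (rule gsrcD(2)[OF assms(1)])
  thus False using assms(2) by simp
qed

lemma gsrc_ex2:
  assumes "gsrc I Gs K F" "s \<in> dom (src K)"
  obtains i v where "i \<in> I" "src (Gs i) s = Some v"
proof -
  have "src K s \<noteq> None" using assms(2) by auto
  from gsrc_ex[OF assms(1) this] show ?thesis using that by blast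
qed

lemma gsrc_iff:
  assumes g: "gcore I Gs K F P" "gsrc I Gs K F" and w: "\<forall>i\<in>I. wf_cgraph ar (Gs i)"
    and i: "i \<in> I" "v \<in> verts (Gs i)"
  shows "src K s = Some (F i v) \<longleftrightarrow> src (Gs i) s = Some v"
proof
  assume h: "src K s = Some (F i v)"
  have "s \<in> dom (src K)" using h by auto
  then obtain j u where j: "j \<in> I" "src (Gs j) s = Some u" by (rule gsrc_ex2[OF g(2)])
  have u: "u \<in> verts (Gs j)" using wf_src w j by blast
  have "F j u = F i v" using gsrcD(1)[OF g(2) j] h by simp
  hence "(j = i \<and> u = v) \<or> (\<exists>r. src (Gs j) r = Some u \<and> src (Gs i) r = Some v)"
    using gcoreD(2)[OF g(1) j(1) i(1) u i(2)] by blast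
  thus "src (Gs i) s = Some v"
  proof
    assume "\<exists>r. src (Gs j) r = Some u \<and> src (Gs i) r = Some v"
    then obtain r where "src (Gs j) r = Some u" "src (Gs i) r = Some v" by blast
    moreover have "r = s" using wf_inj[of ar "Gs j"] w j calculation(1) by blast
    ultimately show ?thesis by simp
  qed (use j in auto)
next
  assume "src (Gs i) s = Some v"
  thus "src K s = Some (F i v)" using gsrcD(1)[OF g(2) i(1)] by blast
qed

lemma wf_glue:
  assumes g: "gcore I Gs K F P" "gsrc I Gs K F" and w: "\<forall>i\<in>I. wf_cgraph ar (Gs i)"
    and fI: "finite I"
  shows "wf_cgraph ar K"
proof -
  have fv: "finite (verts (Gs i))" "finite (edges (Gs i))" if "i \<in> I" for i
    using w that unfolding wf_cgraph_def by blast+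
  have "finite (verts K)" unfolding gcoreD(1)[OF g(1)]
    by (intro finite_UN_I fI finite_imageI fv)
  moreover have "finite (edges K)" unfolding gcoreD(3)[OF g(1)]
    by (intro finite_UN_I fI finite_imageI fv)
  moreover have "\<forall>e\<in>edges K. length (att K e) = ar (lab K e) \<and> set (att K e) \<subseteq> verts K"
  proof
    fix e assume "e \<in> edges K"
    then obtain i e0 where i: "i \<in> I" "e0 \<in> edges (Gs i)" "e = P i e0" using gcoreD(3)[OF g(1)] by blast
    have l: "length (att (Gs i) e0) = ar (lab (Gs i) e0)" and s: "set (att (Gs i) e0) \<subseteq> verts (Gs i)"
      using w i wf_len wf_att by blast+
    have fv: "F i ` verts (Gs i) \<subseteq> verts K" using gcoreD(1)[OF g(1)] i(1) by blast
    have "set (att K e) = F i ` set (att (Gs i) e0)" using gcoreD(6)[OF g(1) i(1,2)] i(3) by simp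
    hence "set (att K e) \<subseteq> verts K" using s fv by blast
    moreover have "length (att K e) = ar (lab K e)"
      using gcoreD(5,6)[OF g(1) i(1,2)] i(3) l by simp
    ultimately show "length (att K e) = ar (lab K e) \<and> set (att K e) \<subseteq> verts K" by blast
  qed
  moreover have "finite (dom (src K))"
  proof -
  have d: "dom (src K) \<subseteq> (\<Union>i\<in>I. dom (src (Gs i)))"
  proof
    fix s assume "s \<in> dom (src K)"
    then obtain i v where "i \<in> I" "src (Gs i) s = Some v" by (rule gsrc_ex2[OF g(2)])
    thus "s \<in> (\<Union>i\<in>I. dom (src (Gs i)))" by blast
  qed
  have f: "finite (\<Union>i\<in>I. dom (src (Gs i)))"
    by (intro finite_UN_I fI) (use w wf_fin in blast)
  show ?thesis using finite_subset[OF d f] .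
  qed
  moreover have "inj_on (src K) (dom (src K))"
  proof (rule inj_onI)
    fix s t assume s: "s \<in> dom (src K)" and t: "t \<in> dom (src K)" and e: "src K s = src K t"
    obtain i v where i: "i \<in> I" "src (Gs i) s = Some v" using s by (rule gsrc_ex2[OF g(2)])
    obtain j u where j: "j \<in> I" "src (Gs j) t = Some u" using t by (rule gsrc_ex2[OF g(2)])
    have vu: "v \<in> verts (Gs i)" "u \<in> verts (Gs j)" using w i j wf_src by blast+
    have "F i v = F j u" using gsrcD(1)[OF g(2) i] gsrcD(1)[OF g(2) j] e by simp
    hence "(i = j \<and> v = u) \<or> (\<exists>r. src (Gs i) r = Some v \<and> src (Gs j) r = Some u)"
      using gcoreD(2)[OF g(1) i(1) j(1) vu] by blast
    thus "s = t"
    proof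
      assume "i = j \<and> v = u" thus ?thesis using wf_inj[of ar "Gs i"] w i j by auto
    next
      assume "\<exists>r. src (Gs i) r = Some v \<and> src (Gs j) r = Some u"
      then obtain r where r: "src (Gs i) r = Some v" "src (Gs j) r = Some u" by blast
      have "r = s" using wf_inj[of ar "Gs i"] w i r by blast
      moreover have "r = t" using wf_inj[of ar "Gs j"] w j r by blast
      ultimately show ?thesis by simp
    qed
  qed
  moreover have "ran (src K) \<subseteq> verts K"
  proof
    fix x assume "x \<in> ran (src K)"
    then obtain s where s: "src K s = Some x" by (auto simp: ran_def)
    have "s \<in> dom (src K)" using s by auto
    then obtain i v where i: "i \<in> I" "src (Gs i) s = Some v" by (rule gsrc_ex2[OF g(2)])
    have "v \<in> verts (Gs i)" using w i wf_src by blast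
    moreover have "x = F i v" using gsrcD(1)[OF g(2) i] s by simp
    ultimately show "x \<in> verts K" using gcoreD(1)[OF g(1)] i by blast
  qed
  ultimately show ?thesis unfolding wf_cgraph_def by blast
qed

lemma pair_one[simp]: "pair a b 1 = b" by (simp add: pair_def)
lemma trip_one[simp]: "trip a b c 1 = b" by (simp add: trip_def)

lemma pv_match:
  assumes wG: "wf_cgraph ar G" and wH: "wf_cgraph ar H" and s: "src G s = Some u" "src H s = Some v"
  shows "par_vmap G H v = 2*u"
proof -
  have ex: "\<exists>s. src H s = Some v \<and> s \<in> dom (src G)" using s by blast
  define s' where "s' = (SOME s. src H s = Some v \<and> s \<in> dom (src G))"
  have "src H s' = Some v \<and> s' \<in> dom (src G)" unfolding s'_def by (rule someI_ex[OF ex])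
  hence "s' = s" using wf_inj[OF wH] s(2) by blast
  thus ?thesis using ex s(1) unfolding par_vmap_def s'_def[symmetric] by simp
qed

lemma pv_nomatch:
  assumes "\<not> (\<exists>s. src H s = Some v \<and> s \<in> dom (src G))"
  shows "par_vmap G H v = 2*v+1"
  unfolding par_vmap_def by (rule if_not_P[OF assms])

lemma two_odd[simp]: "(2*(a::nat) = 2*b+1) = False" "(2*(a::nat)+1 = 2*b) = False"
  "(2*(a::nat) = Suc (2*b)) = False" "(Suc (2*(a::nat)) = 2*b) = False"
  by presburger+

lemma pv_cases:
  assumes wG: "wf_cgraph ar G" and wH: "wf_cgraph ar H"
  obtains (m) s u where "src G s = Some u" "src H s = Some v" "par_vmap G H v = 2*u"
    | (n) "\<forall>s. \<not> (src G s \<noteq> None \<and> src H s = Some v)" "par_vmap G H v = 2*v+1"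
proof (cases "\<exists>s. src H s = Some v \<and> s \<in> dom (src G)")
  case True
  then obtain s u where "src H s = Some v" "src G s = Some u" by blast
  thus ?thesis using m pv_match[OF wG wH] by blast
next
  case False
  thus ?thesis using n pv_nomatch[OF False] by blast
qed

lemma pv_eq2:
  assumes wG: "wf_cgraph ar G" and wH: "wf_cgraph ar H"
  shows "(2*u = par_vmap G H w) \<longleftrightarrow> (\<exists>s. src G s = Some u \<and> src H s = Some w)"
proof (rule pv_cases[OF wG wH, of w])
  fix s u0 assume m: "src G s = Some u0" "src H s = Some w" "par_vmap G H w = 2*u0"
  have "(\<exists>s. src G s = Some u \<and> src H s = Some w) \<longleftrightarrow> u = u0"
  proof
    assume "\<exists>s. src G s = Some u \<and> src H s = Some w"
    then obtain s' where "src G s' = Some u" "src H s' = Some w" by blast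
    moreover have "s' = s" using wf_inj[OF wH] m(2) calculation(2) by blast
    ultimately show "u = u0" using m(1) by simp
  next
    assume "u = u0" thus "\<exists>s. src G s = Some u \<and> src H s = Some w" using m by blast
  qed
  thus ?thesis using m(3) by simp
next
  assume n: "\<forall>s. \<not> (src G s \<noteq> None \<and> src H s = Some w)" "par_vmap G H w = 2*w+1"
  have "\<not> (\<exists>s. src G s = Some u \<and> src H s = Some w)"
  proof
    assume "\<exists>s. src G s = Some u \<and> src H s = Some w"
    then obtain s where "src G s = Some u" "src H s = Some w" by blast
    moreover have "\<not> (src G s \<noteq> None \<and> src H s = Some w)" using n(1) by blast
    ultimately show False by simp
  qed
  thus ?thesis using n(2) by simp
qed

lemma pv_inj:
  assumes wG: "wf_cgraph ar G" and wH: "wf_cgraph ar H"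
  shows "par_vmap G H v = par_vmap G H w \<longleftrightarrow> v = w"
proof
  assume e: "par_vmap G H v = par_vmap G H w"
  show "v = w"
  proof (rule pv_cases[OF wG wH, of v])
    fix s u assume "src G s = Some u" "src H s = Some v" "par_vmap G H v = 2*u"
    show ?thesis
    proof (rule pv_cases[OF wG wH, of w])
      fix s' u' assume m: "src G s' = Some u'" "src H s' = Some w" "par_vmap G H w = 2*u'"
      have "u = u'" using e \<open>par_vmap G H v = 2*u\<close> m(3) by simp
      hence "s = s'" using wf_inj[OF wG] \<open>src G s = Some u\<close> m(1) by blast
      thus ?thesis using \<open>src H s = Some v\<close> m(2) by simp
    next
      assume "\<forall>s. \<not> (src G s \<noteq> None \<and> src H s = Some w)" "par_vmap G H w = 2*w+1"
      thus ?thesis using e \<open>par_vmap G H v = 2*u\<close> by simp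
    qed
  next
    assume "\<forall>s. \<not> (src G s \<noteq> None \<and> src H s = Some v)" "par_vmap G H v = 2*v+1"
    show ?thesis
    proof (rule pv_cases[OF wG wH, of w])
      fix s' u' assume "src G s' = Some u'" "src H s' = Some w" "par_vmap G H w = 2*u'"
      thus ?thesis using e \<open>par_vmap G H v = 2*v+1\<close> by simp
    next
      assume "\<forall>s. \<not> (src G s \<noteq> None \<and> src H s = Some w)" "par_vmap G H w = 2*w+1"
      thus ?thesis using e \<open>par_vmap G H v = 2*v+1\<close> by simp
    qed
  qed
qed simp

lemma c_par_glue:
  assumes wG: "wf_cgraph ar G" and wH: "wf_cgraph ar H"
  shows "gcore {0,1} (pair G H) (c_par G H) (pair (\<lambda>v. 2*v) (par_vmap G H)) (pair (\<lambda>e. 2*e) (\<lambda>e. 2*e+1))"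
    "gsrc {0,1} (pair G H) (c_par G H) (pair (\<lambda>v. 2*v) (par_vmap G H))"
proof -
  have e1: "(2*u = par_vmap G H w) \<longleftrightarrow> (\<exists>s. src G s = Some u \<and> src H s = Some w)" for u w
    by (rule pv_eq2[OF wG wH])
  have e2: "(par_vmap G H w = 2*u) \<longleftrightarrow> (\<exists>s. src H s = Some w \<and> src G s = Some u)" for u w
    by (subst eq_commute) (simp add: e1 conj_commute)
  have e3: "par_vmap G H v = par_vmap G H w \<longleftrightarrow> v = w" for v w by (rule pv_inj[OF wG wH])
  have e4: "((v::nat) = w \<or> (\<exists>s. X s = Some v \<and> X s = Some w)) \<longleftrightarrow> v = w" for X v w by auto
  show "gcore {0,1} (pair G H) (c_par G H) (pair (\<lambda>v. 2*v) (par_vmap G H)) (pair (\<lambda>e. 2*e) (\<lambda>e. 2*e+1))"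
    unfolding gcore_def
    by (simp add: e1 e2 e3 e4 c_par_def)
  show "gsrc {0,1} (pair G H) (c_par G H) (pair (\<lambda>v. 2*v) (par_vmap G H))"
    unfolding gsrc_def
  proof (intro conjI allI impI ballI)
    fix s i v assume i: "i \<in> {0::nat,1}" and sv: "src (pair G H i) s = Some v"
    show "src (c_par G H) s = Some (pair (\<lambda>v. 2*v) (par_vmap G H) i v)"
    proof (cases "i = 0")
      case True thus ?thesis using sv by (simp add: c_par_def)
    next
      case False
      hence i1: "i = 1" using i by simp
      show ?thesis
      proof (cases "src G s")
        case None thus ?thesis using sv i1 by (simp add: c_par_def)
      next
        case (Some u)
        have "par_vmap G H v = 2*u" using pv_match[OF wG wH Some] sv i1 by simp
        thus ?thesis using Some i1 by (simp add: c_par_def)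
      qed
    qed
  next
    fix s assume "\<forall>i\<in>{0::nat,1}. src (pair G H i) s = None"
    thus "src (c_par G H) s = None" by (simp add: c_par_def)
  qed
qed

lemma wf_par:
  assumes "wf_cgraph ar G" "wf_cgraph ar H"
  shows "wf_cgraph ar (c_par G H)"
proof -
  have w: "\<forall>i\<in>{0::nat,1}. wf_cgraph ar (pair G H i)" using assms by simp
  show ?thesis using wf_glue[OF c_par_glue[OF assms] w] by simp
qed

lemma c_rename_sel[simp]: "verts (c_rename \<alpha> G) = verts G" "edges (c_rename \<alpha> G) = edges G"
  "lab (c_rename \<alpha> G) = lab G" "att (c_rename \<alpha> G) = att G" "src (c_rename \<alpha> G) = src G \<circ> \<alpha>"
  by (simp_all add: c_rename_def)
lemma c_restrict_sel[simp]: "verts (c_restrict \<tau> G) = verts G" "edges (c_restrict \<tau> G) = edges G"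
  "lab (c_restrict \<tau> G) = lab G" "att (c_restrict \<tau> G) = att G" "src (c_restrict \<tau> G) = src G |` \<tau>"
  by (simp_all add: c_restrict_def)

lemma gcore_inj:
  assumes "gcore I Gs K F P" "i \<in> I" "v \<in> verts (Gs i)" "w \<in> verts (Gs i)"
  shows "F i v = F i w \<longleftrightarrow> v = w"
  using gcoreD(2)[OF assms(1,2,2,3,4)] by auto

lemma gcore_cross:
  assumes "gcore I Gs K F P" "i \<in> I" "j \<in> I" "i \<noteq> j" "v \<in> verts (Gs i)" "w \<in> verts (Gs j)"
  shows "F i v = F j w \<longleftrightarrow> (\<exists>s. src (Gs i) s = Some v \<and> src (Gs j) s = Some w)"
  using gcoreD(2)[OF assms(1,2,3,5,6)] assms(4) by simp

lemma gcore_einj: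
  assumes "gcore I Gs K F P" "i \<in> I" "e \<in> edges (Gs i)" "e' \<in> edges (Gs i)"
  shows "P i e = P i e' \<longleftrightarrow> e = e'"
  using gcoreD(4)[OF assms(1,2,2,3,4)] by auto

lemma gcore_ecross:
  assumes "gcore I Gs K F P" "i \<in> I" "j \<in> I" "i \<noteq> j" "e \<in> edges (Gs i)" "e' \<in> edges (Gs j)"
  shows "P i e \<noteq> P j e'"
  using gcoreD(4)[OF assms(1,2,3,5,6)] assms(4) by simp

lemma gcore_K:
  assumes "gcore I Gs K F P" "verts K' = verts K" "edges K' = edges K" "lab K' = lab K" "att K' = att K"
  shows "gcore I Gs K' F P"
  using assms unfolding gcore_def by simp

lemma gcore_reindex:
  assumes g: "gcore I Gs K F P" and b: "bij_betw \<pi> I' I"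
    and e: "\<forall>i\<in>I'. Gs' i = Gs (\<pi> i) \<and> F' i = F (\<pi> i) \<and> P' i = P (\<pi> i)"
  shows "gcore I' Gs' K F' P'"
proof -
  have im: "\<pi> ` I' = I" and inj: "inj_on \<pi> I'" using b by (auto simp: bij_betw_def)
  have pi: "\<pi> i \<in> I" if "i \<in> I'" for i using im that by blast
  have ij: "\<pi> i = \<pi> j \<longleftrightarrow> i = j" if "i \<in> I'" "j \<in> I'" for i j using inj that by (auto simp: inj_on_def)
  have U: "(\<Union>j\<in>I. X j) = (\<Union>i\<in>I'. X (\<pi> i))" for X :: "nat \<Rightarrow> nat set"
    using im by blast
  show ?thesis unfolding gcore_def
  proof (intro conjI ballI)
    show "verts K = (\<Union>i\<in>I'. F' i ` verts (Gs' i))"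
      using gcoreD(1)[OF g] U[of "\<lambda>j. F j ` verts (Gs j)"] e by simp
    show "edges K = (\<Union>i\<in>I'. P' i ` edges (Gs' i))"
      using gcoreD(3)[OF g] U[of "\<lambda>j. P j ` edges (Gs j)"] e by simp
    fix i j assume i: "i \<in> I'" and j: "j \<in> I'"
    { fix v w assume v: "v \<in> verts (Gs' i)" and w: "w \<in> verts (Gs' j)"
      show "(F' i v = F' j w) = (i = j \<and> v = w \<or> (\<exists>s. src (Gs' i) s = Some v \<and> src (Gs' j) s = Some w))"
        using gcoreD(2)[OF g pi[OF i] pi[OF j]] v w e i j ij[OF i j] by simp }
    { fix v w assume v: "v \<in> edges (Gs' i)" and w: "w \<in> edges (Gs' j)"
      show "(P' i v = P' j w) = (i = j \<and> v = w)"
        using gcoreD(4)[OF g pi[OF i] pi[OF j]] v w e i j ij[OF i j] by simp }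
  next
    fix i e0 assume i: "i \<in> I'" and e0: "e0 \<in> edges (Gs' i)"
    show "lab K (P' i e0) = lab (Gs' i) e0"
      using gcoreD(5,6)[OF g pi[OF i]] e0 e i by simp
    show "att K (P' i e0) = map (F' i) (att (Gs' i) e0)"
      using gcoreD(5,6)[OF g pi[OF i]] e0 e i by simp
  qed
qed

lemma gsrc_reindex:
  assumes g: "gsrc I Gs K F" and b: "bij_betw \<pi> I' I"
    and e: "\<forall>i\<in>I'. Gs' i = Gs (\<pi> i) \<and> F' i = F (\<pi> i)"
  shows "gsrc I' Gs' K F'"
proof -
  have im: "\<pi> ` I' = I" using b by (auto simp: bij_betw_def)
  show ?thesis unfolding gsrc_def
  proof (intro conjI allI ballI impI)
    fix s i v assume i: "i \<in> I'" and sv: "src (Gs' i) s = Some v"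
    have "\<pi> i \<in> I" using im i by blast
    thus "src K s = Some (F' i v)" using gsrcD(1)[OF g] sv e i by simp
  next
    fix s assume a: "\<forall>i\<in>I'. src (Gs' i) s = None"
    have "\<forall>j\<in>I. src (Gs j) s = None"
    proof
      fix j assume "j \<in> I"
      then obtain i where "i \<in> I'" "j = \<pi> i" using im by blast
      thus "src (Gs j) s = None" using a e by simp
    qed
    thus "src K s = None" by (rule gsrcD(2)[OF g])
  qed
qed

lemma iso_src_iff:
  assumes m: "iso_maps G' G f g" and w: "wf_cgraph ar G'" and v: "v \<in> verts G'"
  shows "src G s = Some (f v) \<longleftrightarrow> src G' s = Some v"
proof -
  have s: "src G s = map_option f (src G' s)" and inj: "inj_on f (verts G')"
    using m unfolding iso_maps_def bij_betw_def by auto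
  show ?thesis
  proof (cases "src G' s")
    case None thus ?thesis using s by simp
  next
    case (Some v')
    have "v' \<in> verts G'" using wf_src[OF w Some] .
    thus ?thesis using s Some inj v by (auto simp: inj_on_def)
  qed
qed

lemma gcore_comp_iso:
  assumes g: "gcore I Gs K F P" and m: "\<forall>i\<in>I. iso_maps (Gs' i) (Gs i) (fs i) (gs i)"
    and ww: "\<forall>i\<in>I. wf_cgraph ar (Gs' i)"
  shows "gcore I Gs' K (\<lambda>i. F i \<circ> fs i) (\<lambda>i. P i \<circ> gs i)"
proof -
  have bf: "bij_betw (fs i) (verts (Gs' i)) (verts (Gs i))" and bg: "bij_betw (gs i) (edges (Gs' i)) (edges (Gs i))"
    and le: "\<forall>e\<in>edges (Gs' i). lab (Gs i) (gs i e) = lab (Gs' i) e \<and> att (Gs i) (gs i e) = map (fs i) (att (Gs' i) e)"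
    if "i \<in> I" for i using m that unfolding iso_maps_def by auto
  show ?thesis unfolding gcore_def
  proof (intro conjI ballI)
    have "F i ` verts (Gs i) = (F i \<circ> fs i) ` verts (Gs' i)" if "i \<in> I" for i
      using bf[OF that] unfolding bij_betw_def by (metis image_comp)
    thus "verts K = (\<Union>i\<in>I. (F i \<circ> fs i) ` verts (Gs' i))" using gcoreD(1)[OF g] by simp
    have "P i ` edges (Gs i) = (P i \<circ> gs i) ` edges (Gs' i)" if "i \<in> I" for i
      using bg[OF that] unfolding bij_betw_def by (metis image_comp)
    thus "edges K = (\<Union>i\<in>I. (P i \<circ> gs i) ` edges (Gs' i))" using gcoreD(3)[OF g] by simp
    fix i j assume i: "i \<in> I" and j: "j \<in> I"
    { fix v w assume v: "v \<in> verts (Gs' i)" and w: "w \<in> verts (Gs' j)"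
      have fv: "fs i v \<in> verts (Gs i)" "fs j w \<in> verts (Gs j)"
        using bf[OF i] bf[OF j] v w by (auto simp: bij_betw_def)
      have si: "src (Gs i) s = Some (fs i v) \<longleftrightarrow> src (Gs' i) s = Some v" for s
        using iso_src_iff[OF m[rule_format, OF i] ww[rule_format, OF i] v] .
      have sj: "src (Gs j) s = Some (fs j w) \<longleftrightarrow> src (Gs' j) s = Some w" for s
        using iso_src_iff[OF m[rule_format, OF j] ww[rule_format, OF j] w] .
      have ii: "i = j \<Longrightarrow> (fs i v = fs j w \<longleftrightarrow> v = w)"
        using bf[OF i] v w by (auto simp: bij_betw_def inj_on_def)
      show "((F i \<circ> fs i) v = (F j \<circ> fs j) w) = (i = j \<and> v = w \<or> (\<exists>s. src (Gs' i) s = Some v \<and> src (Gs' j) s = Some w))"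
        using gcoreD(2)[OF g i j fv] si sj ii by auto }
    { fix v w assume v: "v \<in> edges (Gs' i)" and w: "w \<in> edges (Gs' j)"
      have fv: "gs i v \<in> edges (Gs i)" "gs j w \<in> edges (Gs j)"
        using bg[OF i] bg[OF j] v w by (auto simp: bij_betw_def)
      have ii: "i = j \<Longrightarrow> (gs i v = gs j w \<longleftrightarrow> v = w)"
        using bg[OF i] v w by (auto simp: bij_betw_def inj_on_def)
      show "((P i \<circ> gs i) v = (P j \<circ> gs j) w) = (i = j \<and> v = w)"
        using gcoreD(4)[OF g i j fv] ii by auto }
  next
    fix i e0 assume i: "i \<in> I" and e0: "e0 \<in> edges (Gs' i)"
    have fe: "gs i e0 \<in> edges (Gs i)" using bg[OF i] e0 by (auto simp: bij_betw_def)
    show "lab K ((P i \<circ> gs i) e0) = lab (Gs' i) e0"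
      using gcoreD(5,6)[OF g i fe] le[OF i] e0 by simp
    show "att K ((P i \<circ> gs i) e0) = map (F i \<circ> fs i) (att (Gs' i) e0)"
      using gcoreD(5,6)[OF g i fe] le[OF i] e0 by simp
  qed
qed

lemma gsrc_comp_iso:
  assumes g: "gsrc I Gs K F" and m: "\<forall>i\<in>I. iso_maps (Gs' i) (Gs i) (fs i) (gs i)"
  shows "gsrc I Gs' K (\<lambda>i. F i \<circ> fs i)"
proof -
  have s: "src (Gs i) s = map_option (fs i) (src (Gs' i) s)" if "i \<in> I" for i s
    using m that unfolding iso_maps_def by auto
  show ?thesis unfolding gsrc_def
  proof (intro conjI allI ballI impI)
    fix s i v assume i: "i \<in> I" and sv: "src (Gs' i) s = Some v"
    thus "src K s = Some ((F i \<circ> fs i) v)" using gsrcD(1)[OF g i, of s] s[OF i, of s] by simp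
  next
    fix s assume "\<forall>i\<in>I. src (Gs' i) s = None"
    hence "\<forall>i\<in>I. src (Gs i) s = None" using s by simp
    thus "src K s = None" by (rule gsrcD(2)[OF g])
  qed
qed

lemma gcore_rename:
  assumes g: "gcore I Gs K F P" and a: "surj \<alpha>"
  shows "gcore I (\<lambda>i. c_rename \<alpha> (Gs i)) (c_rename \<alpha> K) F P"
proof -
  have m: "(\<exists>s. src (Gs i) (\<alpha> s) = Some v \<and> src (Gs j) (\<alpha> s) = Some w) \<longleftrightarrow>
           (\<exists>s. src (Gs i) s = Some v \<and> src (Gs j) s = Some w)" for i j v w
    using a by (metis surjD)
  show ?thesis using g unfolding gcore_def by (simp add: m)
qed

lemma gsrc_rename:
  assumes g: "gsrc I Gs K F"
  shows "gsrc I (\<lambda>i. c_rename \<alpha> (Gs i)) (c_rename \<alpha> K) F"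
  unfolding gsrc_def
proof (intro conjI allI ballI impI)
  fix s i v assume "i \<in> I" "src (c_rename \<alpha> (Gs i)) s = Some v"
  thus "src (c_rename \<alpha> K) s = Some (F i v)" using gsrcD(1)[OF g] by simp
next
  fix s assume "\<forall>i\<in>I. src (c_rename \<alpha> (Gs i)) s = None"
  thus "src (c_rename \<alpha> K) s = None" using gsrcD(2)[OF g, of "\<alpha> s"] by simp
qed

lemma gcore_match:
  assumes g: "gcore I Gs K F P"
    and e: "\<forall>i\<in>I. verts (Gs' i) = verts (Gs i) \<and> edges (Gs' i) = edges (Gs i) \<and> lab (Gs' i) = lab (Gs i) \<and> att (Gs' i) = att (Gs i)"
    and m: "\<forall>i\<in>I. \<forall>j\<in>I. i \<noteq> j \<longrightarrow> (\<forall>v w. (\<exists>s. src (Gs' i) s = Some v \<and> src (Gs' j) s = Some w) \<longleftrightarrow> (\<exists>s. src (Gs i) s = Some v \<and> src (Gs j) s = Some w))"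
  shows "gcore I Gs' K F P"
proof -
  have e4: "((v::nat) = w \<or> (\<exists>s. X s = Some v \<and> X s = Some w)) \<longleftrightarrow> v = w" for X v w by auto
  have c: "(F i v = F j w) = (i = j \<and> v = w \<or> (\<exists>s. src (Gs' i) s = Some v \<and> src (Gs' j) s = Some w))"
    if i: "i \<in> I" and j: "j \<in> I" and v: "v \<in> verts (Gs' i)" and w: "w \<in> verts (Gs' j)" for i j v w
  proof (cases "i = j")
    case True
    thus ?thesis using gcoreD(2)[OF g i j] v w e i j by (simp add: e4)
  next
    case False
    thus ?thesis using gcoreD(2)[OF g i j] v w e i j m by simp
  qed
  show ?thesis unfolding gcore_def
  proof (intro conjI ballI)
    show "verts K = (\<Union>i\<in>I. F i ` verts (Gs' i))" using gcoreD(1)[OF g] e by simp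
    show "edges K = (\<Union>i\<in>I. P i ` edges (Gs' i))" using gcoreD(3)[OF g] e by simp
  next
    fix i j v w assume "i \<in> I" "j \<in> I" "v \<in> verts (Gs' i)" "w \<in> verts (Gs' j)"
    thus "(F i v = F j w) = (i = j \<and> v = w \<or> (\<exists>s. src (Gs' i) s = Some v \<and> src (Gs' j) s = Some w))"
      by (rule c)
  next
    fix i j v w assume "i \<in> I" "j \<in> I" "v \<in> edges (Gs' i)" "w \<in> edges (Gs' j)"
    thus "(P i v = P j w) = (i = j \<and> v = w)" using gcoreD(4)[OF g] e by simp
  next
    fix i v assume "i \<in> I" "v \<in> edges (Gs' i)"
    thus "lab K (P i v) = lab (Gs' i) v"
      using gcoreD(5,6)[OF g] e by simp
  next
    fix i v assume "i \<in> I" "v \<in> edges (Gs' i)"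
    thus "att K (P i v) = map (F i) (att (Gs' i) v)"
      using gcoreD(5,6)[OF g] e by simp
  qed
qed

lemma e4[simp]: "((v::nat) = w \<or> (\<exists>s. X s = Some v \<and> X s = Some w)) \<longleftrightarrow> v = w" by auto

lemma flatten:
  assumes g1: "gcore {0,1} (pair M J) K F P" "gsrc {0,1} (pair M J) K F"
    and g2: "gcore {0,1} (pair G H) M F1 P1" "gsrc {0,1} (pair G H) M F1"
    and wG: "wf_cgraph ar G" and wH: "wf_cgraph ar H" and wJ: "wf_cgraph ar J" and wM: "wf_cgraph ar M"
  shows "gcore {0,1,2} (trip G H J) K (trip (F 0 \<circ> F1 0) (F 0 \<circ> F1 1) (F 1)) (trip (P 0 \<circ> P1 0) (P 0 \<circ> P1 1) (P 1))"
    "gsrc {0,1,2} (trip G H J) K (trip (F 0 \<circ> F1 0) (F 0 \<circ> F1 1) (F 1))"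
proof -
  have w1: "\<forall>i\<in>{0::nat,1}. wf_cgraph ar (pair M J i)" using wM wJ by simp
  have w2: "\<forall>i\<in>{0::nat,1}. wf_cgraph ar (pair G H i)" using wG wH by simp
  have VK: "verts K = F 0 ` verts M \<union> F 1 ` verts J" using gcoreD(1)[OF g1(1)] by simp
  have VM: "verts M = F1 0 ` verts G \<union> F1 1 ` verts H" using gcoreD(1)[OF g2(1)] by simp
  have EK: "edges K = P 0 ` edges M \<union> P 1 ` edges J" using gcoreD(3)[OF g1(1)] by simp
  have EM: "edges M = P1 0 ` edges G \<union> P1 1 ` edges H" using gcoreD(3)[OF g2(1)] by simp
  have i00: "a \<in> verts M \<Longrightarrow> b \<in> verts M \<Longrightarrow> F 0 a = F 0 b \<longleftrightarrow> a = b" for a b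
    using gcore_inj[OF g1(1), of 0 a b] by simp
  have i11: "a \<in> verts J \<Longrightarrow> b \<in> verts J \<Longrightarrow> F 1 a = F 1 b \<longleftrightarrow> a = b" for a b
    using gcore_inj[OF g1(1), of 1 a b] by simp
  have i01: "a \<in> verts M \<Longrightarrow> b \<in> verts J \<Longrightarrow> F 0 a = F 1 b \<longleftrightarrow> (\<exists>s. src M s = Some a \<and> src J s = Some b)" for a b
    using gcore_cross[OF g1(1), of 0 1 a b] by simp
  have i10: "a \<in> verts J \<Longrightarrow> b \<in> verts M \<Longrightarrow> F 1 a = F 0 b \<longleftrightarrow> (\<exists>s. src J s = Some a \<and> src M s = Some b)" for a b
    using gcore_cross[OF g1(1), of 1 0 a b] by simp
  have j00: "a \<in> verts G \<Longrightarrow> b \<in> verts G \<Longrightarrow> F1 0 a = F1 0 b \<longleftrightarrow> a = b" for a b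
    using gcore_inj[OF g2(1), of 0 a b] by simp
  have j11: "a \<in> verts H \<Longrightarrow> b \<in> verts H \<Longrightarrow> F1 1 a = F1 1 b \<longleftrightarrow> a = b" for a b
    using gcore_inj[OF g2(1), of 1 a b] by simp
  have j01: "a \<in> verts G \<Longrightarrow> b \<in> verts H \<Longrightarrow> F1 0 a = F1 1 b \<longleftrightarrow> (\<exists>s. src G s = Some a \<and> src H s = Some b)" for a b
    using gcore_cross[OF g2(1), of 0 1 a b] by simp
  have j10: "a \<in> verts H \<Longrightarrow> b \<in> verts G \<Longrightarrow> F1 1 a = F1 0 b \<longleftrightarrow> (\<exists>s. src H s = Some a \<and> src G s = Some b)" for a b
    using gcore_cross[OF g2(1), of 1 0 a b] by simp
  have sM0: "v \<in> verts G \<Longrightarrow> src M s = Some (F1 0 v) \<longleftrightarrow> src G s = Some v" for v s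
    using gsrc_iff[OF g2 w2, of 0 v s] by simp
  have sM1: "v \<in> verts H \<Longrightarrow> src M s = Some (F1 1 v) \<longleftrightarrow> src H s = Some v" for v s
    using gsrc_iff[OF g2 w2, of 1 v s] by simp
  have m0: "v \<in> verts G \<Longrightarrow> F1 0 v \<in> verts M" for v using VM by blast
  have m1: "v \<in> verts H \<Longrightarrow> F1 1 v \<in> verts M" for v using VM by blast
  have ei00: "a \<in> edges M \<Longrightarrow> b \<in> edges M \<Longrightarrow> P 0 a = P 0 b \<longleftrightarrow> a = b" for a b
    using gcore_einj[OF g1(1), of 0 a b] by simp
  have ei11: "a \<in> edges J \<Longrightarrow> b \<in> edges J \<Longrightarrow> P 1 a = P 1 b \<longleftrightarrow> a = b" for a b
    using gcore_einj[OF g1(1), of 1 a b] by simp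
  have ei01: "a \<in> edges M \<Longrightarrow> b \<in> edges J \<Longrightarrow> P 0 a \<noteq> P 1 b" for a b
    using gcore_ecross[OF g1(1), of 0 1 a b] by simp
  have ej00: "a \<in> edges G \<Longrightarrow> b \<in> edges G \<Longrightarrow> P1 0 a = P1 0 b \<longleftrightarrow> a = b" for a b
    using gcore_einj[OF g2(1), of 0 a b] by simp
  have ej11: "a \<in> edges H \<Longrightarrow> b \<in> edges H \<Longrightarrow> P1 1 a = P1 1 b \<longleftrightarrow> a = b" for a b
    using gcore_einj[OF g2(1), of 1 a b] by simp
  have ej01: "a \<in> edges G \<Longrightarrow> b \<in> edges H \<Longrightarrow> P1 0 a \<noteq> P1 1 b" for a b
    using gcore_ecross[OF g2(1), of 0 1 a b] by simp
  have em0: "e \<in> edges G \<Longrightarrow> P1 0 e \<in> edges M" for e using EM by blast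
  have em1: "e \<in> edges H \<Longrightarrow> P1 1 e \<in> edges M" for e using EM by blast
  have lK0: "a \<in> edges M \<Longrightarrow> lab K (P 0 a) = lab M a \<and> att K (P 0 a) = map (F 0) (att M a)" for a
    using gcoreD(5,6)[OF g1(1), of 0 a] by simp
  have lK1: "a \<in> edges J \<Longrightarrow> lab K (P 1 a) = lab J a \<and> att K (P 1 a) = map (F 1) (att J a)" for a
    using gcoreD(5,6)[OF g1(1), of 1 a] by simp
  have lM0: "a \<in> edges G \<Longrightarrow> lab M (P1 0 a) = lab G a \<and> att M (P1 0 a) = map (F1 0) (att G a)" for a
    using gcoreD(5,6)[OF g2(1), of 0 a] by simp
  have lM1: "a \<in> edges H \<Longrightarrow> lab M (P1 1 a) = lab H a \<and> att M (P1 1 a) = map (F1 1) (att H a)" for a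
    using gcoreD(5,6)[OF g2(1), of 1 a] by simp
  note vf = i00 i11 i01 i10 j00 j11 j01 j10 sM0 sM1 m0 m1
  note vf = vf[unfolded One_nat_def]
  note lf = lK0 lK1 lM0 lM1 em0 em1
  note lf = lf[unfolded One_nat_def]
  have I3: "i \<in> {0::nat,1,2} \<longleftrightarrow> i = 0 \<or> i = 1 \<or> i = 2" for i by auto
  show "gcore {0,1,2} (trip G H J) K (trip (F 0 \<circ> F1 0) (F 0 \<circ> F1 1) (F 1)) (trip (P 0 \<circ> P1 0) (P 0 \<circ> P1 1) (P 1))"
    unfolding gcore_def
  proof (intro conjI)
    show "verts K = (\<Union>i\<in>{0,1,2}. trip (F 0 \<circ> F1 0) (F 0 \<circ> F1 1) (F 1) i ` verts (trip G H J i))"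
      by (simp add: VK VM image_Un image_comp Un_assoc)
    show "edges K = (\<Union>i\<in>{0,1,2}. trip (P 0 \<circ> P1 0) (P 0 \<circ> P1 1) (P 1) i ` edges (trip G H J i))"
      by (simp add: EK EM image_Un image_comp Un_assoc)
    show "\<forall>i\<in>{0,1,2}. \<forall>j\<in>{0,1,2}. \<forall>v\<in>verts (trip G H J i). \<forall>w\<in>verts (trip G H J j).
      (trip (F 0 \<circ> F1 0) (F 0 \<circ> F1 1) (F 1) i v = trip (F 0 \<circ> F1 0) (F 0 \<circ> F1 1) (F 1) j w) =
      (i = j \<and> v = w \<or> (\<exists>s. src (trip G H J i) s = Some v \<and> src (trip G H J j) s = Some w))"
    proof (intro ballI)
      fix i j v w assume i: "i \<in> {0::nat,1,2}" and j: "j \<in> {0::nat,1,2}"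
        and v: "v \<in> verts (trip G H J i)" and w: "w \<in> verts (trip G H J j)"
      show "(trip (F 0 \<circ> F1 0) (F 0 \<circ> F1 1) (F 1) i v = trip (F 0 \<circ> F1 0) (F 0 \<circ> F1 1) (F 1) j w) =
      (i = j \<and> v = w \<or> (\<exists>s. src (trip G H J i) s = Some v \<and> src (trip G H J j) s = Some w))"
        using i j unfolding I3
        apply (elim disjE)
        using v w by (simp_all add: vf)
    qed
    show "\<forall>i\<in>{0,1,2}. \<forall>j\<in>{0,1,2}. \<forall>v\<in>edges (trip G H J i). \<forall>w\<in>edges (trip G H J j).
      (trip (P 0 \<circ> P1 0) (P 0 \<circ> P1 1) (P 1) i v = trip (P 0 \<circ> P1 0) (P 0 \<circ> P1 1) (P 1) j w) = (i = j \<and> v = w)"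
    proof (intro ballI)
      fix i j v w assume i: "i \<in> {0::nat,1,2}" and j: "j \<in> {0::nat,1,2}"
        and v: "v \<in> edges (trip G H J i)" and w: "w \<in> edges (trip G H J j)"
      have ei10: "a \<in> edges J \<Longrightarrow> b \<in> edges M \<Longrightarrow> P 1 a \<noteq> P 0 b" for a b using ei01 by metis
      have ej10: "a \<in> edges H \<Longrightarrow> b \<in> edges G \<Longrightarrow> P1 1 a \<noteq> P1 0 b" for a b using ej01 by metis
      note ef = ei00 ei11 ei01 ei10 ej00 ej11 ej01 ej10 em0 em1
  note ef = ef[unfolded One_nat_def]
      show "(trip (P 0 \<circ> P1 0) (P 0 \<circ> P1 1) (P 1) i v = trip (P 0 \<circ> P1 0) (P 0 \<circ> P1 1) (P 1) j w) = (i = j \<and> v = w)"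
        using i j unfolding I3
        apply (elim disjE)
        using v w by (simp_all add: ef)
    qed
    show "\<forall>i\<in>{0,1,2}. \<forall>e\<in>edges (trip G H J i).
       lab K (trip (P 0 \<circ> P1 0) (P 0 \<circ> P1 1) (P 1) i e) = lab (trip G H J i) e \<and>
       att K (trip (P 0 \<circ> P1 0) (P 0 \<circ> P1 1) (P 1) i e) = map (trip (F 0 \<circ> F1 0) (F 0 \<circ> F1 1) (F 1) i) (att (trip G H J i) e)"
    proof (intro ballI)
      fix i e assume i: "i \<in> {0::nat,1,2}" and e: "e \<in> edges (trip G H J i)"
      show "lab K (trip (P 0 \<circ> P1 0) (P 0 \<circ> P1 1) (P 1) i e) = lab (trip G H J i) e \<and>
       att K (trip (P 0 \<circ> P1 0) (P 0 \<circ> P1 1) (P 1) i e) = map (trip (F 0 \<circ> F1 0) (F 0 \<circ> F1 1) (F 1) i) (att (trip G H J i) e)"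
        using i unfolding I3
        apply (elim disjE)
        using e by (simp_all add: lf)
    qed
  qed
  show "gsrc {0,1,2} (trip G H J) K (trip (F 0 \<circ> F1 0) (F 0 \<circ> F1 1) (F 1))"
    unfolding gsrc_def
  proof (intro conjI allI ballI impI)
    fix s i v assume i: "i \<in> {0::nat,1,2}" and sv: "src (trip G H J i) s = Some v"
    show "src K s = Some (trip (F 0 \<circ> F1 0) (F 0 \<circ> F1 1) (F 1) i v)"
      using i unfolding I3
    proof (elim disjE)
      assume "i = 0"
      hence "src M s = Some (F1 0 v)" using gsrcD(1)[OF g2(2), of 0 s v] sv by simp
      thus ?thesis using gsrcD(1)[OF g1(2), of 0 s] \<open>i = 0\<close> by simp
    next
      assume "i = 1"
      hence "src M s = Some (F1 1 v)" using gsrcD(1)[OF g2(2), of 1 s v] sv by simp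
      thus ?thesis using gsrcD(1)[OF g1(2), of 0 s] \<open>i = 1\<close> by simp
    next
      assume "i = 2"
      thus ?thesis using gsrcD(1)[OF g1(2), of 1 s v] sv by simp
    qed
  next
    fix s assume a: "\<forall>i\<in>{0::nat,1,2}. src (trip G H J i) s = None"
    have "src M s = None" using gsrcD(2)[OF g2(2), of s] a by simp
    thus "src K s = None" using gsrcD(2)[OF g1(2), of s] a by simp
  qed
qed

lemma par_glue:
  assumes "wf_cgraph ar G" "wf_cgraph ar H"
  obtains F P where "gcore {0,1} (pair G H) (c_par G H) F P" "gsrc {0,1} (pair G H) (c_par G H) F"
  using c_par_glue[OF assms] by blast

lemma w2: "wf_cgraph ar G \<Longrightarrow> wf_cgraph ar H \<Longrightarrow> \<forall>i\<in>{0::nat,1}. wf_cgraph ar (pair G H i)"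
  by simp

lemma par_comm:
  assumes wG: "wf_cgraph ar G" and wH: "wf_cgraph ar H"
  shows "cg_iso (c_par G H) (c_par H G)"
proof -
  obtain F P where g: "gcore {0,1} (pair G H) (c_par G H) F P" "gsrc {0,1} (pair G H) (c_par G H) F"
    using par_glue[OF wG wH] .
  obtain F' P' where g': "gcore {0,1} (pair H G) (c_par H G) F' P'" "gsrc {0,1} (pair H G) (c_par H G) F'"
    using par_glue[OF wH wG] .
  have b: "bij_betw (\<lambda>i::nat. 1 - i) {0,1} {0,1}" by (auto simp: bij_betw_def inj_on_def)
  have e: "\<forall>i\<in>{0::nat,1}. pair H G i = pair G H (1 - i) \<and> F (1 - i) = F (1 - i) \<and> P (1 - i) = P (1 - i)"
    by simp
  have r1: "gcore {0,1} (pair H G) (c_par G H) (\<lambda>i. F (1 - i)) (\<lambda>i. P (1 - i))"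
    by (rule gcore_reindex[OF g(1) b]) (use e in simp)
  have r2: "gsrc {0,1} (pair H G) (c_par G H) (\<lambda>i. F (1 - i))"
    by (rule gsrc_reindex[OF g(2) b]) (use e in simp)
  show ?thesis by (rule gluing_iso[OF r1 r2 g' w2[OF wH wG]])
qed

lemma par_resp:
  assumes wG: "wf_cgraph ar G" and wH: "wf_cgraph ar H" and wG': "wf_cgraph ar G'" and wH': "wf_cgraph ar H'"
    and c1: "cg_iso G G'" and c2: "cg_iso H H'"
  shows "cg_iso (c_par G H) (c_par G' H')"
proof -
  obtain f1 g1 where m1: "iso_maps G' G f1 g1" using cg_iso_sym[OF wG c1] cg_iso_maps by blast
  obtain f2 g2 where m2: "iso_maps H' H f2 g2" using cg_iso_sym[OF wH c2] cg_iso_maps by blast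
  obtain F P where g: "gcore {0,1} (pair G H) (c_par G H) F P" "gsrc {0,1} (pair G H) (c_par G H) F"
    using par_glue[OF wG wH] .
  obtain F' P' where g': "gcore {0,1} (pair G' H') (c_par G' H') F' P'" "gsrc {0,1} (pair G' H') (c_par G' H') F'"
    using par_glue[OF wG' wH'] .
  have m: "\<forall>i\<in>{0::nat,1}. iso_maps (pair G' H' i) (pair G H i) (pair f1 f2 i) (pair g1 g2 i)"
    using m1 m2 by simp
  show ?thesis
    by (rule gluing_iso[OF gcore_comp_iso[OF g(1) m w2[OF wG' wH']] gsrc_comp_iso[OF g(2) m] g' w2[OF wG' wH']])
qed

lemma par_assoc:
  assumes wG: "wf_cgraph ar G" and wH: "wf_cgraph ar H" and wJ: "wf_cgraph ar J"
  shows "cg_iso (c_par (c_par G H) J) (c_par G (c_par H J))"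
proof -
  have wM: "wf_cgraph ar (c_par G H)" and wN: "wf_cgraph ar (c_par H J)" using wf_par assms by blast+
  obtain F P where g1: "gcore {0,1} (pair (c_par G H) J) (c_par (c_par G H) J) F P"
      "gsrc {0,1} (pair (c_par G H) J) (c_par (c_par G H) J) F"
    using par_glue[OF wM wJ] .
  obtain F1 P1 where g2: "gcore {0,1} (pair G H) (c_par G H) F1 P1" "gsrc {0,1} (pair G H) (c_par G H) F1"
    using par_glue[OF wG wH] .
  note k1 = flatten[OF g1 g2 wG wH wJ wM]
  obtain F' P' where g3: "gcore {0,1} (pair (c_par H J) G) (c_par (c_par H J) G) F' P'"
      "gsrc {0,1} (pair (c_par H J) G) (c_par (c_par H J) G) F'"
    using par_glue[OF wN wG] .
  obtain F1' P1' where g4: "gcore {0,1} (pair H J) (c_par H J) F1' P1'" "gsrc {0,1} (pair H J) (c_par H J) F1'"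
    using par_glue[OF wH wJ] .
  note k3 = flatten[OF g3 g4 wH wJ wG wN]
  define \<pi> where "\<pi> = (\<lambda>i::nat. if i = 0 then 2 else i - 1)"
  have b: "bij_betw \<pi> {0,1,2} {0,1,2}" unfolding \<pi>_def by (auto simp: bij_betw_def inj_on_def)
  define FF where "FF = trip (F' 0 \<circ> F1' 0) (F' 0 \<circ> F1' 1) (F' 1)"
  define PP where "PP = trip (P' 0 \<circ> P1' 0) (P' 0 \<circ> P1' 1) (P' 1)"
  have e: "\<forall>i\<in>{0::nat,1,2}. trip G H J i = trip H J G (\<pi> i) \<and> FF (\<pi> i) = FF (\<pi> i) \<and> PP (\<pi> i) = PP (\<pi> i)"
    unfolding \<pi>_def by (auto simp: trip_def)
  have r1: "gcore {0,1,2} (trip G H J) (c_par (c_par H J) G) (\<lambda>i. FF (\<pi> i)) (\<lambda>i. PP (\<pi> i))"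
    by (rule gcore_reindex[OF k3(1)[folded FF_def PP_def] b]) (use e in simp)
  have r2: "gsrc {0,1,2} (trip G H J) (c_par (c_par H J) G) (\<lambda>i. FF (\<pi> i))"
    by (rule gsrc_reindex[OF k3(2)[folded FF_def] b]) (use e in simp)
  have w3: "\<forall>i\<in>{0::nat,1,2}. wf_cgraph ar (trip G H J i)" using wG wH wJ by (auto simp: trip_def)
  have "cg_iso (c_par (c_par G H) J) (c_par (c_par H J) G)"
    by (rule gluing_iso[OF k1 r1 r2 w3])
  moreover have "cg_iso (c_par (c_par H J) G) (c_par G (c_par H J))" by (rule par_comm[OF wN wG])
  ultimately show ?thesis by (rule cg_iso_trans)
qed

lemma par_rename:
  assumes wG: "wf_cgraph ar G" and wH: "wf_cgraph ar H" and b: "bij \<alpha>"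
  shows "cg_iso (c_rename \<alpha> (c_par G H)) (c_par (c_rename \<alpha> G) (c_rename \<alpha> H))"
proof -
  obtain F P where g: "gcore {0,1} (pair G H) (c_par G H) F P" "gsrc {0,1} (pair G H) (c_par G H) F"
    using par_glue[OF wG wH] .
  have s: "surj \<alpha>" using b by (simp add: bij_def)
  have wG': "wf_cgraph ar (c_rename \<alpha> G)" and wH': "wf_cgraph ar (c_rename \<alpha> H)"
    using wf_rename b wG wH by blast+
  obtain F' P' where g': "gcore {0,1} (pair (c_rename \<alpha> G) (c_rename \<alpha> H)) (c_par (c_rename \<alpha> G) (c_rename \<alpha> H)) F' P'"
    "gsrc {0,1} (pair (c_rename \<alpha> G) (c_rename \<alpha> H)) (c_par (c_rename \<alpha> G) (c_rename \<alpha> H)) F'"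
    using par_glue[OF wG' wH'] .
  have bi: "bij_betw id {0::nat,1} {0,1}" by simp
  have e: "\<forall>i\<in>{0::nat,1}. pair (c_rename \<alpha> G) (c_rename \<alpha> H) i = c_rename \<alpha> (pair G H (id i)) \<and> F (id i) = F (id i) \<and> P (id i) = P (id i)"
    by simp
  have r1: "gcore {0,1} (pair (c_rename \<alpha> G) (c_rename \<alpha> H)) (c_rename \<alpha> (c_par G H)) (\<lambda>i. F (id i)) (\<lambda>i. P (id i))"
    by (rule gcore_reindex[OF gcore_rename[OF g(1) s] bi]) (use e in simp)
  have r2: "gsrc {0,1} (pair (c_rename \<alpha> G) (c_rename \<alpha> H)) (c_rename \<alpha> (c_par G H)) (\<lambda>i. F (id i))"
    by (rule gsrc_reindex[OF gsrc_rename[OF g(2)] bi]) (use e in simp)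
  show ?thesis by (rule gluing_iso[OF r1 r2 g' w2[OF wG' wH']])
qed

definition E0 :: "'a cgraph" where
  "E0 = \<lparr>verts = {}, edges = {}, lab = (\<lambda>_. undefined), att = (\<lambda>_. []), src = Map.empty\<rparr>"

lemma wf_E0: "wf_cgraph ar E0"
  by (simp add: wf_cgraph_def E0_def)

lemma r0_E0:
  assumes wA: "wf_cgraph ar A"
  shows "cg_iso (c_restrict {} (c_par A E0)) (c_restrict {} A)"
proof -
  obtain F P where g: "gcore {0,1} (pair A E0) (c_par A E0) F P" "gsrc {0,1} (pair A E0) (c_par A E0) F"
    using par_glue[OF wA wf_E0] .
  have g1: "gcore {0,1} (pair A E0) (c_restrict {} (c_par A E0)) F P"
    by (rule gcore_K[OF g(1)]) simp_all
  have g2: "gcore {0,1} (pair A E0) (c_restrict {} A) (pair id id) (pair id id)"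
    unfolding gcore_def by (simp add: E0_def)
  show ?thesis by (rule glue0_iso[OF g1 _ g2 _ w2[OF wA wf_E0]]) simp_all
qed

lemma r0_match:
  assumes wA: "wf_cgraph ar A" and wB: "wf_cgraph ar B" and wA': "wf_cgraph ar A'" and wB': "wf_cgraph ar B'"
    and sA: "verts A' = verts A" "edges A' = edges A" "lab A' = lab A" "att A' = att A"
    and sB: "verts B' = verts B" "edges B' = edges B" "lab B' = lab B" "att B' = att B"
    and m: "\<And>v w. (\<exists>s. src A' s = Some v \<and> src B' s = Some w) \<longleftrightarrow> (\<exists>s. src A s = Some v \<and> src B s = Some w)"
  shows "cg_iso (c_restrict {} (c_par A' B')) (c_restrict {} (c_par A B))"
proof -
  obtain F P where g: "gcore {0,1} (pair A' B') (c_par A' B') F P"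
    using par_glue[OF wA' wB'] by blast
  obtain F' P' where g': "gcore {0,1} (pair A B) (c_par A B) F' P'"
    using par_glue[OF wA wB] by blast
  have m2: "(\<exists>s. src B' s = Some v \<and> src A' s = Some w) \<longleftrightarrow> (\<exists>s. src B s = Some v \<and> src A s = Some w)" for v w
    using m[of w v] by blast
  have g1: "gcore {0,1} (pair A B) (c_par A' B') F P"
    by (rule gcore_match[OF g]) (use sA sB m m2 in auto)
  have h1: "gcore {0,1} (pair A B) (c_restrict {} (c_par A' B')) F P"
    by (rule gcore_K[OF g1]) simp_all
  have h2: "gcore {0,1} (pair A B) (c_restrict {} (c_par A B)) F' P'"
    by (rule gcore_K[OF g']) simp_all
  show ?thesis by (rule glue0_iso[OF h1 _ h2 _ w2[OF wA wB]]) simp_all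
qed

definition sw :: "nat \<Rightarrow> nat \<Rightarrow> nat \<Rightarrow> nat" where
  "sw a b x = (if x = a then b else if x = b then a else x)"

lemma sw_bij: "bij (sw a b)"
proof -
  have "sw a b \<circ> sw a b = id" by (rule ext) (simp add: sw_def)
  thus ?thesis using o_bij by blast
qed

lemma exists_perm:
  fixes T :: "nat set"
  assumes fT: "finite T" and fX: "finite X"
  shows "\<forall>A. finite A \<longrightarrow> X \<inter> A = {} \<longrightarrow> (\<exists>\<beta>. bij \<beta> \<and> (\<forall>a\<in>A. \<beta> a = a) \<and> \<beta> ` X \<inter> T = {})"
  using fX
proof (induction X rule: finite_induct)
  case empty
  show ?case by (intro allI impI exI[of _ id]) (simp add: bij_betw_def)
next
  case (insert x X0)
  show ?case
  proof (intro allI impI)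
    fix A :: "nat set" assume fA: "finite A" and d: "insert x X0 \<inter> A = {}"
    have d0: "X0 \<inter> insert x A = {}" using d insert.hyps(2) by blast
    have fA': "finite (insert x A)" using fA by simp
    from insert.IH[rule_format, OF fA' d0]
    obtain \<beta>0 where b0: "bij \<beta>0" "\<forall>a\<in>insert x A. \<beta>0 a = a" "\<beta>0 ` X0 \<inter> T = {}"
      by blast
    show "\<exists>\<beta>. bij \<beta> \<and> (\<forall>a\<in>A. \<beta> a = a) \<and> \<beta> ` insert x X0 \<inter> T = {}"
    proof (cases "x \<in> T")
      case False
      thus ?thesis using b0 by (intro exI[of _ \<beta>0]) auto
    next
      case True
      have "finite (T \<union> A \<union> \<beta>0 ` X0 \<union> {x})" using fT fA insert.hyps(1) by simp
      hence "\<exists>f. f \<notin> T \<union> A \<union> \<beta>0 ` X0 \<union> {x}" by (rule ex_new_if_finite[OF infinite_UNIV_nat])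
      then obtain f where f: "f \<notin> T \<union> A \<union> \<beta>0 ` X0 \<union> {x}" by blast
      define \<beta> where "\<beta> = sw x f \<circ> \<beta>0"
      have "bij \<beta>" unfolding \<beta>_def using sw_bij b0(1) by (rule bij_comp[rotated])
      moreover have "\<forall>a\<in>A. \<beta> a = a"
      proof
        fix a assume a: "a \<in> A"
        have "a \<noteq> x" using a d by blast
        moreover have "a \<noteq> f" using a f by blast
        ultimately show "\<beta> a = a" using b0(2) a by (simp add: \<beta>_def sw_def)
      qed
      moreover have "\<beta> ` insert x X0 \<inter> T = {}"
      proof -
        have "\<beta> x = f" using b0(2) by (simp add: \<beta>_def sw_def)
        moreover have "\<beta> y = \<beta>0 y" if y: "y \<in> X0" for y
        proof -
          have "y \<noteq> x" using y insert.hyps(2) by blast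
          hence "\<beta>0 y \<noteq> \<beta>0 x" using b0(1) by (simp add: bij_def inj_eq)
          hence "\<beta>0 y \<noteq> x" using b0(2) by simp
          moreover have "\<beta>0 y \<noteq> f" using f y by blast
          ultimately show ?thesis by (simp add: \<beta>_def sw_def)
        qed
        ultimately show ?thesis using f b0(3) by auto
      qed
      ultimately show ?thesis by blast
    qed
  qed
qed

lemma c_rename_comp: "c_rename \<alpha> (c_rename \<beta> G) = c_rename (\<beta> \<circ> \<alpha>) G"
  by (simp add: c_rename_def comp_assoc)
lemma c_rename_id: "c_rename id G = G"
  by (simp add: c_rename_def)
lemma c_restrict_UNIV: "c_restrict UNIV G = G"
proof -
  have "src G |` UNIV = src G" by (rule ext) (simp add: restrict_map_def)
  thus ?thesis by (simp add: c_restrict_def)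
qed
lemma c_restrict_restrict: "c_restrict \<rho> (c_restrict \<tau> G) = c_restrict (\<rho> \<inter> \<tau>) G"
  by (simp add: c_restrict_def Int_commute)
lemma c_restrict_dom:
  assumes "dom (src G) \<subseteq> D" shows "c_restrict \<rho> G = c_restrict (\<rho> \<inter> D) G"
proof -
  have "src G |` \<rho> = src G |` (\<rho> \<inter> D)"
  proof (rule ext)
    fix x show "(src G |` \<rho>) x = (src G |` (\<rho> \<inter> D)) x"
    proof (cases "x \<in> D")
      case False
      hence "src G x = None" using assms by blast
      thus ?thesis by (simp add: restrict_map_def)
    qed (simp add: restrict_map_def)
  qed
  thus ?thesis by (simp add: c_restrict_def)
qed
lemma c_restrict0_rename: "c_restrict {} (c_rename \<alpha> G) = c_restrict {} G"
  by (simp add: c_restrict_def c_rename_def)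
lemma c_restrict_rename:
  assumes "bij \<alpha>"
  shows "c_restrict \<rho> (c_rename \<alpha> G) = c_rename \<alpha> (c_restrict (\<alpha> ` \<rho>) G)"
proof -
  have "(src G \<circ> \<alpha>) |` \<rho> = (src G |` (\<alpha> ` \<rho>)) \<circ> \<alpha>"
    using assms by (auto simp: restrict_map_def bij_def inj_image_mem_iff)
  thus ?thesis by (simp add: c_restrict_def c_rename_def)
qed
lemma c_restrict_empty_dom: "dom (src G) = {} \<Longrightarrow> c_restrict {} G = G"
  by (simp add: c_restrict_def)

lemma dom_par: "dom (src (c_par G H)) = dom (src G) \<union> dom (src H)"
  by (auto simp: c_par_def split: option.splits)

lemma cls_par:
  assumes "wf_cgraph ar G" "wf_cgraph ar H"
  shows "g_par ar (iso_class ar G) (iso_class ar H) = iso_class ar (c_par G H)"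
proof -
  let ?R1 = "rep (iso_class ar G)" and ?R2 = "rep (iso_class ar H)"
  have w: "wf_cgraph ar ?R1" "wf_cgraph ar ?R2" "cg_iso ?R1 G" "cg_iso ?R2 H"
    using rep_iso[OF assms(1)] rep_iso[OF assms(2)] cg_iso_sym[OF assms(1)] cg_iso_sym[OF assms(2)] by blast+
  have "cg_iso (c_par ?R1 ?R2) (c_par G H)" by (rule par_resp[OF w(1,2) assms w(3,4)])
  thus ?thesis unfolding g_par_def
    by (simp add: iso_class_eq wf_par w(1,2) assms)
qed

lemma gs_fin: "x \<in> graphs ar \<Longrightarrow> finite (gsort x)"
  by (erule graphsE) (simp add: gsort_iso_class wf_fin)

lemma gr_ms:
  assumes "x \<in> graphs ar"
  shows "g_restrict ar \<tau> x \<in> graphs ar \<and> gsort (g_restrict ar \<tau> x) = gsort x \<inter> \<tau>"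
proof -
  obtain X where X: "wf_cgraph ar X" "x = iso_class ar X" using assms by (rule graphsE)
  have "dom (src X |` \<tau>) = dom (src X) \<inter> \<tau>" by (auto simp: restrict_map_def split: if_splits)
  thus ?thesis using X by (simp add: g_restrict_cls graphsI wf_restrict gsort_iso_class)
qed

lemma grn_ms:
  assumes "x \<in> graphs ar" "bij \<alpha>"
  shows "g_rename ar \<alpha> x \<in> graphs ar \<and> gsort (g_rename ar \<alpha> x) = \<alpha> -` gsort x"
proof -
  obtain X where X: "wf_cgraph ar X" "x = iso_class ar X" using assms(1) by (rule graphsE)
  have "dom (src X \<circ> \<alpha>) = \<alpha> -` dom (src X)" by auto
  thus ?thesis using X assms(2) by (simp add: g_rename_cls graphsI wf_rename gsort_iso_class)
qed

lemma gp_ms: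
  assumes "x \<in> graphs ar" "y \<in> graphs ar"
  shows "g_par ar x y \<in> graphs ar \<and> gsort (g_par ar x y) = gsort x \<union> gsort y"
proof -
  obtain X where X: "wf_cgraph ar X" "x = iso_class ar X" using assms(1) by (rule graphsE)
  obtain Y where Y: "wf_cgraph ar Y" "y = iso_class ar Y" using assms(2) by (rule graphsE)
  show ?thesis using X Y by (simp add: cls_par graphsI wf_par gsort_iso_class dom_par)
qed

lemma id_restrict:
  assumes "x \<in> graphs ar"
  shows "g_restrict ar \<rho> (g_restrict ar \<tau> x) = g_restrict ar (\<rho> \<inter> \<tau>) x"
proof -
  obtain X where X: "wf_cgraph ar X" "x = iso_class ar X" using assms(1) by (rule graphsE)
  show ?thesis using X by (simp add: g_restrict_cls wf_restrict c_restrict_restrict)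
qed

lemma id_comm:
  assumes "x \<in> graphs ar" "y \<in> graphs ar"
  shows "g_par ar x y = g_par ar y x"
proof -
  obtain X where X: "wf_cgraph ar X" "x = iso_class ar X" using assms(1) by (rule graphsE)
  obtain Y where Y: "wf_cgraph ar Y" "y = iso_class ar Y" using assms(2) by (rule graphsE)
  show ?thesis using X Y par_comm[OF X(1) Y(1)] by (simp add: cls_par iso_class_eq wf_par)
qed

lemma id_rename:
  assumes x: "x \<in> graphs ar" and h: "H \<in> graphs ar" and b: "bij \<alpha>"
  shows "g_restrict ar {} (g_par ar (g_restrict ar \<rho> (g_rename ar \<alpha> x)) H) =
         g_restrict ar {} (g_par ar (g_restrict ar (\<alpha> ` \<rho>) x) (g_rename ar (inv \<alpha>) H))"
proof -
  obtain X where X: "wf_cgraph ar X" "x = iso_class ar X" using x by (rule graphsE)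
  obtain Hc where Hc: "wf_cgraph ar Hc" "H = iso_class ar Hc" using h by (rule graphsE)
  have bi: "bij (inv \<alpha>)" using b by (rule bij_imp_bij_inv)
  define A where "A = c_restrict (\<alpha> ` \<rho>) X"
  define B where "B = c_rename (inv \<alpha>) Hc"
  have wA: "wf_cgraph ar A" unfolding A_def using X(1) by (rule wf_restrict)
  have wB: "wf_cgraph ar B" unfolding B_def using Hc(1) bi by (rule wf_rename)
  have wrA: "wf_cgraph ar (c_rename \<alpha> A)" using wA b by (rule wf_rename)
  have e1: "c_restrict \<rho> (c_rename \<alpha> X) = c_rename \<alpha> A" unfolding A_def by (rule c_restrict_rename[OF b])
  have e2: "c_rename \<alpha> B = Hc" unfolding B_def c_rename_comp using b
    by (simp add: bij_def c_rename_id)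
  have "cg_iso (c_rename \<alpha> (c_par A B)) (c_par (c_rename \<alpha> A) (c_rename \<alpha> B))"
    by (rule par_rename[OF wA wB b])
  hence "cg_iso (c_restrict {} (c_par A B)) (c_restrict {} (c_par (c_rename \<alpha> A) Hc))"
    using cg_iso_restrict c_restrict0_rename e2 by metis
  hence e3: "iso_class ar (c_restrict {} (c_par A B)) = iso_class ar (c_restrict {} (c_par (c_rename \<alpha> A) Hc))"
    using wA wB wrA Hc(1) by (simp add: iso_class_eq wf_restrict wf_par)
  have l: "g_restrict ar {} (g_par ar (g_restrict ar \<rho> (g_rename ar \<alpha> x)) H) =
      iso_class ar (c_restrict {} (c_par (c_rename \<alpha> A) Hc))"
    using X Hc b wrA by (simp add: g_rename_cls g_restrict_cls cls_par wf_rename wf_restrict wf_par e1)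
  have r: "g_restrict ar {} (g_par ar (g_restrict ar (\<alpha> ` \<rho>) x) (g_rename ar (inv \<alpha>) H)) =
      iso_class ar (c_restrict {} (c_par A B))"
    using X Hc bi wA wB by (simp add: g_rename_cls g_restrict_cls cls_par wf_rename wf_restrict wf_par A_def B_def)
  show ?thesis using l r e3[symmetric] by simp
qed

lemma cls_eq: "wf_cgraph ar G \<Longrightarrow> wf_cgraph ar G' \<Longrightarrow> cg_iso G G' \<Longrightarrow> iso_class ar G = iso_class ar G'"
  by (simp add: iso_class_eq)

lemma id_KL:
  assumes w: "w \<in> graphs ar" and z: "z \<in> graphs ar" and h: "H \<in> graphs ar" and b: "bij \<beta>"
    and fx: "\<forall>a\<in>\<rho> \<inter> (gsort w \<union> gsort z). \<beta> a = a"
    and out: "\<beta> -` gsort H \<inter> (gsort w \<union> gsort z) \<subseteq> \<rho>"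
  shows "g_restrict ar {} (g_par ar (g_restrict ar \<rho> (g_par ar w z)) H) =
         g_restrict ar {} (g_par ar (g_restrict ar UNIV w) (g_par ar z (g_rename ar \<beta> H)))"
proof -
  obtain W where W: "wf_cgraph ar W" "w = iso_class ar W" using w by (rule graphsE)
  obtain Z where Z: "wf_cgraph ar Z" "z = iso_class ar Z" using z by (rule graphsE)
  obtain Hc where Hc: "wf_cgraph ar Hc" "H = iso_class ar Hc" using h by (rule graphsE)
  define S where "S = dom (src W) \<union> dom (src Z)"
  define \<rho>' where "\<rho>' = \<rho> \<inter> S"
  have fx': "\<And>a. a \<in> \<rho>' \<Longrightarrow> \<beta> a = a" using fx W Z unfolding \<rho>'_def S_def by (simp add: gsort_iso_class)
  have out': "\<And>s. \<beta> s \<in> dom (src Hc) \<Longrightarrow> s \<in> S \<Longrightarrow> s \<in> \<rho>"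
    using out W Z Hc unfolding S_def by (auto simp: gsort_iso_class)
  define M where "M = c_par W Z"
  define A where "A = c_restrict \<rho>' M"
  define B2 where "B2 = c_rename \<beta> Hc"
  have wM: "wf_cgraph ar M" unfolding M_def using W Z by (simp add: wf_par)
  have wA: "wf_cgraph ar A" unfolding A_def using wM by (rule wf_restrict)
  have wB2: "wf_cgraph ar B2" unfolding B2_def using Hc(1) b by (rule wf_rename)
  have wZB: "wf_cgraph ar (c_par Z B2)" using Z(1) wB2 by (rule wf_par)
  have dM: "dom (src M) = S" unfolding M_def S_def by (rule dom_par)
  have eM: "c_restrict \<rho> M = A" unfolding A_def \<rho>'_def using dM by (simp add: c_restrict_dom)
  have mb: "(\<exists>s. src A s = Some v \<and> src Hc (\<beta> s) = Some u) \<longleftrightarrow> (\<exists>s. src A s = Some v \<and> src Hc s = Some u)" for v u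
  proof -
    have k: "src A s = Some v \<Longrightarrow> \<beta> s = s" for s
      using fx' unfolding A_def by (auto simp: restrict_map_def split: if_splits)
    show ?thesis using k by auto
  qed
  have sb: "cg_iso (c_restrict {} (c_par A B2)) (c_restrict {} (c_par A Hc))"
    by (rule r0_match[OF wA Hc(1) wA wB2]) (simp_all add: B2_def mb)
  have mc: "(\<exists>s. src A s = Some v \<and> src B2 s = Some u) \<longleftrightarrow> (\<exists>s. src M s = Some v \<and> src B2 s = Some u)" for v u
  proof
    assume "\<exists>s. src A s = Some v \<and> src B2 s = Some u"
    thus "\<exists>s. src M s = Some v \<and> src B2 s = Some u"
      unfolding A_def by (auto simp: restrict_map_def split: if_splits)
  next
    assume "\<exists>s. src M s = Some v \<and> src B2 s = Some u"
    then obtain s where s: "src M s = Some v" "src B2 s = Some u" by blast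
    have "s \<in> S" using s(1) dM by blast
    moreover have "\<beta> s \<in> dom (src Hc)" using s(2) unfolding B2_def by auto
    ultimately have "s \<in> \<rho>'" using out' unfolding \<rho>'_def by blast
    hence "src A s = Some v" using s(1) unfolding A_def by (simp add: restrict_map_def)
    thus "\<exists>s. src A s = Some v \<and> src B2 s = Some u" using s(2) by blast
  qed
  have sc: "cg_iso (c_restrict {} (c_par A B2)) (c_restrict {} (c_par M B2))"
    by (rule r0_match[OF wM wB2 wA wB2]) (simp_all add: A_def mc[unfolded A_def c_restrict_sel])
  have sd: "cg_iso (c_restrict {} (c_par M B2)) (c_restrict {} (c_par W (c_par Z B2)))"
    unfolding M_def by (rule cg_iso_restrict[OF par_assoc[OF W(1) Z(1) wB2]])
  have w1: "wf_cgraph ar (c_restrict {} (c_par A Hc))" using wA Hc(1) by (simp add: wf_restrict wf_par)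
  have w2: "wf_cgraph ar (c_restrict {} (c_par A B2))" using wA wB2 by (simp add: wf_restrict wf_par)
  have w3: "wf_cgraph ar (c_restrict {} (c_par M B2))" using wM wB2 by (simp add: wf_restrict wf_par)
  have w4: "wf_cgraph ar (c_restrict {} (c_par W (c_par Z B2)))" using W(1) wZB by (simp add: wf_restrict wf_par)
  have "iso_class ar (c_restrict {} (c_par A Hc)) = iso_class ar (c_restrict {} (c_par A B2))"
    using cls_eq[OF w2 w1 sb] by simp
  also have "\<dots> = iso_class ar (c_restrict {} (c_par M B2))" by (rule cls_eq[OF w2 w3 sc])
  also have "\<dots> = iso_class ar (c_restrict {} (c_par W (c_par Z B2)))" by (rule cls_eq[OF w3 w4 sd])
  finally have fin: "iso_class ar (c_restrict {} (c_par A Hc)) = iso_class ar (c_restrict {} (c_par W (c_par Z B2)))" .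
  have l: "g_restrict ar {} (g_par ar (g_restrict ar \<rho> (g_par ar w z)) H) = iso_class ar (c_restrict {} (c_par A Hc))"
    using W Z Hc wM wA by (simp add: cls_par g_restrict_cls wf_par wf_restrict M_def[symmetric] eM)
  have r: "g_restrict ar {} (g_par ar (g_restrict ar UNIV w) (g_par ar z (g_rename ar \<beta> H))) =
      iso_class ar (c_restrict {} (c_par W (c_par Z B2)))"
    using W Z Hc wB2 wZB b by (simp add: cls_par g_restrict_cls g_rename_cls wf_par wf_restrict wf_rename
        c_restrict_UNIV B2_def[symmetric])
  show ?thesis using l r fin by simp
qed

lemma id_fin:
  assumes x: "x \<in> graphs ar" and h: "H \<in> graphs ar" and s: "gsort x \<subseteq> \<sigma>"
  shows "g_restrict ar {} (g_par ar (g_restrict ar \<rho> x) H) =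
         g_restrict ar {} (g_par ar (g_restrict ar (\<rho> \<inter> \<sigma>) x) (g_restrict ar \<sigma> H))"
proof -
  obtain X where X: "wf_cgraph ar X" "x = iso_class ar X" using x by (rule graphsE)
  obtain Hc where Hc: "wf_cgraph ar Hc" "H = iso_class ar Hc" using h by (rule graphsE)
  have dX: "dom (src X) \<subseteq> \<sigma>" using s X by (simp add: gsort_iso_class)
  define A where "A = c_restrict (\<rho> \<inter> \<sigma>) X"
  define B where "B = c_restrict \<sigma> Hc"
  have wA: "wf_cgraph ar A" unfolding A_def using X(1) by (rule wf_restrict)
  have wB: "wf_cgraph ar B" unfolding B_def using Hc(1) by (rule wf_restrict)
  have eA: "c_restrict \<rho> X = A" unfolding A_def using dX by (rule c_restrict_dom)
  have m: "(\<exists>s. src A s = Some v \<and> (src Hc |` \<sigma>) s = Some u) \<longleftrightarrow> (\<exists>s. src A s = Some v \<and> src Hc s = Some u)" for v u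
  proof -
    have k: "src A s = Some v \<Longrightarrow> s \<in> \<sigma>" for s
      using dX unfolding A_def by (auto simp: restrict_map_def split: if_splits)
    show ?thesis using k by (auto simp: restrict_map_def)
  qed
  have i: "cg_iso (c_restrict {} (c_par A B)) (c_restrict {} (c_par A Hc))"
    by (rule r0_match[OF wA Hc(1) wA wB]) (simp_all add: B_def m)
  have w1: "wf_cgraph ar (c_restrict {} (c_par A Hc))" using wA Hc(1) by (simp add: wf_restrict wf_par)
  have w2: "wf_cgraph ar (c_restrict {} (c_par A B))" using wA wB by (simp add: wf_restrict wf_par)
  have l: "g_restrict ar {} (g_par ar (g_restrict ar \<rho> x) H) = iso_class ar (c_restrict {} (c_par A Hc))"
    using X Hc wA by (simp add: cls_par g_restrict_cls wf_par wf_restrict eA)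
  have r: "g_restrict ar {} (g_par ar (g_restrict ar (\<rho> \<inter> \<sigma>) x) (g_restrict ar \<sigma> H)) =
      iso_class ar (c_restrict {} (c_par A B))"
    using X Hc wA wB by (simp add: cls_par g_restrict_cls wf_par wf_restrict A_def[symmetric] B_def[symmetric])
  show ?thesis using l r cls_eq[OF w2 w1 i] by simp
qed

lemma id_sat:
  assumes x: "x \<in> graphs ar" and s: "gsort x = {}"
  shows "g_restrict ar {} (g_par ar (g_restrict ar {} x) (iso_class ar E0)) = x"
proof -
  obtain X where X: "wf_cgraph ar X" "x = iso_class ar X" using x by (rule graphsE)
  have dX: "dom (src X) = {}" using s X by (simp add: gsort_iso_class)
  have eX: "c_restrict {} X = X" using dX by (rule c_restrict_empty_dom)
  have i: "cg_iso (c_restrict {} (c_par X E0)) X" using r0_E0[OF X(1)] eX by simp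
  have w1: "wf_cgraph ar (c_restrict {} (c_par X E0))" using X(1) wf_E0[of ar] by (simp add: wf_restrict wf_par)
  have l: "g_restrict ar {} (g_par ar (g_restrict ar {} x) (iso_class ar E0)) = iso_class ar (c_restrict {} (c_par X E0))"
    using X wf_E0[of ar] by (simp add: cls_par g_restrict_cls wf_par wf_restrict eX)
  show ?thesis using l cls_eq[OF w1 X(1) i] X(2) by simp
qed

lemma quot_fin:
  assumes eR: "equiv B R" and eE: "equiv C E" and AB: "A \<subseteq> B"
    and cl: "\<forall>x\<in>A. R``{x} \<subseteq> A" and sub: "\<forall>x\<in>A. \<forall>y\<in>A. (x,y)\<in>R \<longrightarrow> (x,y)\<in>E"
    and f: "finite (A//R)"
  shows "finite (A//E)"
proof -
  have rR: "refl_on B R" using eR by (simp add: equiv_def)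
  have tE: "trans E" using eE by (simp add: equiv_def)
  have "A//E \<subseteq> (\<lambda>X. E``X) ` (A//R)"
  proof
    fix Y assume "Y \<in> A//E"
    then obtain x where x: "x \<in> A" "Y = E``{x}" by (rule quotientE) blast
    have "E``(R``{x}) = E``{x}"
    proof
      show "E``(R``{x}) \<subseteq> E``{x}"
      proof
        fix z assume "z \<in> E``(R``{x})"
        then obtain y where y: "(x,y) \<in> R" "(y,z) \<in> E" by blast
        have "y \<in> A" using cl x(1) y(1) by blast
        hence "(x,y) \<in> E" using sub x(1) y(1) by blast
        hence "(x,z) \<in> E" using y(2) tE by (meson transD)
        thus "z \<in> E``{x}" by simp
      qed
      have "(x,x) \<in> R" using rR AB x(1) by (auto simp: refl_on_def)
      thus "E``{x} \<subseteq> E``(R``{x})" by blast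
    qed
    moreover have "R``{x} \<in> A//R" using x(1) by (rule quotientI)
    ultimately show "Y \<in> (\<lambda>X. E``X) ` (A//R)" using x(2) by (metis image_eqI)
  qed
  moreover have "finite ((\<lambda>X. E``X) ` (A//R))" using f by simp
  ultimately show ?thesis by (rule finite_subset)
qed

lemma finperm_bij: "finperm \<alpha> \<Longrightarrow> bij \<alpha>" by (simp add: finperm_def)

lemma fwd:
  assumes LU: "L \<subseteq> graphs ar" and L0: "\<forall>x\<in>L. gsort x = {}" and rg: "recognizable_G ar L"
    and ft: "finite \<tau>"
  shows "recognizable_Gtau ar \<tau> L"
proof -
  obtain R where hR: "hr_congruence ar (graphs ar) {\<tau>. finite \<tau>} {\<alpha>. finperm \<alpha>} R"
    and sat: "\<forall>(x,y)\<in>R. x\<in>L \<longrightarrow> y\<in>L"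
    using rg unfolding recognizable_G_def recognizable_in_def by blast
  note h = hR[unfolded hr_congruence_def]
  have eR: "equiv (graphs ar) R" using h by (rule conjunct1)
  have sR: "\<forall>(x,y)\<in>R. gsort x = gsort y" using h by (elim conjE)
  have rR: "\<forall>\<tau>\<in>{\<tau>. finite \<tau>}. \<forall>(x,y)\<in>R. (g_restrict ar \<tau> x, g_restrict ar \<tau> y) \<in> R" using h by (elim conjE)
  have nR: "\<forall>\<alpha>\<in>{\<alpha>. finperm \<alpha>}. \<forall>(x,y)\<in>R. (g_rename ar \<alpha> x, g_rename ar \<alpha> y) \<in> R" using h by (elim conjE)
  have pR: "\<forall>(x,y)\<in>R. \<forall>(x',y')\<in>R. (g_par ar x x', g_par ar y y') \<in> R" using h by (elim conjE)
  have fR: "\<forall>\<sigma>. finite ({x\<in>graphs ar. gsort x = \<sigma>} // R)" using h by (elim conjE)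
  have RU: "R \<subseteq> graphs ar \<times> graphs ar" and rfR: "refl_on (graphs ar) R" and syR: "sym R" and trR: "trans R"
    using eR by (simp_all add: equiv_def)
  define U where "U = {x\<in>graphs ar. gsort x \<subseteq> \<tau>}"
  define R' where "R' = R \<inter> (U \<times> U)"
  have mR': "(x,y) \<in> R' \<longleftrightarrow> (x,y) \<in> R \<and> x \<in> U \<and> y \<in> U" for x y by (simp add: R'_def)
  have inU: "x \<in> U \<longleftrightarrow> x \<in> graphs ar \<and> gsort x \<subseteq> \<tau>" for x by (simp add: U_def)
  have "hr_congruence ar U (Pow \<tau>) {\<alpha>. finperm \<alpha> \<and> (\<forall>s. s \<notin> \<tau> \<longrightarrow> \<alpha> s = s)} R'"
    unfolding hr_congruence_def
  proof (intro conjI)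
    show "equiv U R'" unfolding equiv_def
    proof (intro conjI)
      show "R' \<subseteq> U \<times> U" unfolding R'_def by blast
      show "refl_on U R'" using rfR unfolding refl_on_def R'_def U_def by blast
      show "sym R'" using syR unfolding sym_def R'_def by blast
      show "trans R'" using trR unfolding trans_def R'_def by blast
    qed
    show "\<forall>(x,y)\<in>R'. gsort x = gsort y" using sR unfolding R'_def by blast
    show "\<forall>\<tau>'\<in>Pow \<tau>. \<forall>(x,y)\<in>R'. (g_restrict ar \<tau>' x, g_restrict ar \<tau>' y) \<in> R'"
    proof (intro ballI, safe)
      fix \<tau>' x y assume t: "\<tau>' \<subseteq> \<tau>" and xy: "(x,y) \<in> R'"
      have "finite \<tau>'" using t ft by (rule finite_subset)
      hence r: "(g_restrict ar \<tau>' x, g_restrict ar \<tau>' y) \<in> R" using rR xy mR' by blast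
      have "x \<in> graphs ar" "y \<in> graphs ar" using xy mR' inU by blast+
      hence "g_restrict ar \<tau>' x \<in> U" "g_restrict ar \<tau>' y \<in> U" using gr_ms t unfolding inU by blast+
      thus "(g_restrict ar \<tau>' x, g_restrict ar \<tau>' y) \<in> R'" using r mR' by blast
    qed
    show "\<forall>\<alpha>\<in>{\<alpha>. finperm \<alpha> \<and> (\<forall>s. s \<notin> \<tau> \<longrightarrow> \<alpha> s = s)}. \<forall>(x,y)\<in>R'. (g_rename ar \<alpha> x, g_rename ar \<alpha> y) \<in> R'"
    proof (intro ballI, safe)
      fix \<alpha> x y assume fp: "finperm \<alpha>" and fx: "\<forall>s. s \<notin> \<tau> \<longrightarrow> \<alpha> s = s" and xy: "(x,y) \<in> R'"
      have r: "(g_rename ar \<alpha> x, g_rename ar \<alpha> y) \<in> R" using nR xy mR' fp by blast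
      have b: "bij \<alpha>" using fp by (rule finperm_bij)
      have sub: "\<alpha> -` S \<subseteq> \<tau>" if "S \<subseteq> \<tau>" for S
      proof
        fix s assume "s \<in> \<alpha> -` S"
        hence "\<alpha> s \<in> \<tau>" using that by blast
        thus "s \<in> \<tau>" using fx by metis
      qed
      have "x \<in> U" "y \<in> U" using xy mR' by blast+
      hence xg: "x \<in> graphs ar" "gsort x \<subseteq> \<tau>" "y \<in> graphs ar" "gsort y \<subseteq> \<tau>" unfolding inU by blast+
      have "g_rename ar \<alpha> x \<in> U" using grn_ms[OF xg(1) b] sub[OF xg(2)] unfolding inU by simp
      moreover have "g_rename ar \<alpha> y \<in> U" using grn_ms[OF xg(3) b] sub[OF xg(4)] unfolding inU by simp
      ultimately have "g_rename ar \<alpha> x \<in> U" "g_rename ar \<alpha> y \<in> U" by blast+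
      thus "(g_rename ar \<alpha> x, g_rename ar \<alpha> y) \<in> R'" using r mR' by blast
    qed
    show "\<forall>(x,y)\<in>R'. \<forall>(x',y')\<in>R'. (g_par ar x x', g_par ar y y') \<in> R'"
    proof (safe)
      fix x y x' y' assume xy: "(x,y) \<in> R'" and xy': "(x',y') \<in> R'"
      have r: "(g_par ar x x', g_par ar y y') \<in> R" using pR xy xy' mR' by blast
      have "x \<in> U" "y \<in> U" "x' \<in> U" "y' \<in> U" using xy xy' mR' by blast+
      hence "g_par ar x x' \<in> U" "g_par ar y y' \<in> U" using gp_ms unfolding inU by auto
      thus "(g_par ar x x', g_par ar y y') \<in> R'" using r mR' by blast
    qed
    show "\<forall>\<sigma>. finite ({x\<in>U. gsort x = \<sigma>} // R')"
    proof
      fix \<sigma> :: "nat set"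
      show "finite ({x\<in>U. gsort x = \<sigma>} // R')"
      proof (cases "\<sigma> \<subseteq> \<tau>")
        case True
        have A: "{x\<in>U. gsort x = \<sigma>} = {x\<in>graphs ar. gsort x = \<sigma>}" using True unfolding U_def by auto
        have "R'``{x} = R``{x}" if x: "x \<in> {x\<in>graphs ar. gsort x = \<sigma>}" for x
        proof
          show "R'``{x} \<subseteq> R``{x}" unfolding R'_def by blast
          show "R``{x} \<subseteq> R'``{x}"
          proof
            fix y assume "y \<in> R``{x}"
            hence y: "(x,y) \<in> R" by simp
            have "y \<in> graphs ar" using y RU by blast
            moreover have "gsort y = \<sigma>" using sR y x by auto
            ultimately have "y \<in> U" "x \<in> U" using True x unfolding U_def by auto
            thus "y \<in> R'``{x}" using y mR' by blast
          qed
        qed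
        hence "{x\<in>graphs ar. gsort x = \<sigma>} // R' = {x\<in>graphs ar. gsort x = \<sigma>} // R"
          unfolding quotient_def by auto
        thus ?thesis using A fR by simp
      next
        case False
        hence e: "{x\<in>U. gsort x = \<sigma>} = {}" unfolding U_def by auto
        show ?thesis unfolding e by (simp add: quotient_def)
      qed
    qed
  qed
  moreover have "L \<subseteq> U" using LU L0 unfolding U_def by auto
  moreover have "\<forall>(x,y)\<in>R'. x \<in> L \<longrightarrow> y \<in> L" using sat unfolding R'_def by blast
  ultimately show ?thesis unfolding recognizable_Gtau_def recognizable_in_def U_def[symmetric] by blast
qed

lemma bwd:
  assumes LU: "L \<subseteq> graphs ar" and L0: "\<forall>x\<in>L. gsort x = {}"
    and h: "\<forall>\<tau>. finite \<tau> \<longrightarrow> recognizable_Gtau ar \<tau> L"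
  shows "recognizable_G ar L"
proof -
  let ?U = "graphs ar"
  define Q where "Q \<rho> H x = (g_restrict ar {} (g_par ar (g_restrict ar \<rho> x) H) \<in> L)" for \<rho> H x
  define E where "E = {(x,y). x \<in> ?U \<and> y \<in> ?U \<and> gsort x = gsort y \<and> (\<forall>\<rho>. \<forall>H\<in>?U. Q \<rho> H x = Q \<rho> H y)}"
  have mE: "(x,y) \<in> E \<longleftrightarrow> x \<in> ?U \<and> y \<in> ?U \<and> gsort x = gsort y \<and> (\<forall>\<rho>. \<forall>H\<in>?U. Q \<rho> H x = Q \<rho> H y)" for x y
    by (simp add: E_def)
  have KL: "\<exists>H1\<in>?U. \<forall>w'\<in>?U. gsort w' = gsort w \<longrightarrow> (Q \<rho> H (g_par ar w' z) \<longleftrightarrow> Q UNIV H1 w')"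
    if w: "w \<in> ?U" and z: "z \<in> ?U" and hh: "H \<in> ?U" for w z H \<rho>
  proof -
    define S where "S = gsort w \<union> gsort z"
    define \<rho>' where "\<rho>' = \<rho> \<inter> S"
    have fS: "finite S" unfolding S_def using gs_fin w z by blast
    have ex: "\<forall>A. finite A \<longrightarrow> (S - \<rho>') \<inter> A = {} \<longrightarrow> (\<exists>\<beta>. bij \<beta> \<and> (\<forall>a\<in>A. \<beta> a = a) \<and> \<beta> ` (S - \<rho>') \<inter> gsort H = {})"
      by (rule exists_perm) (use gs_fin[OF hh] fS in auto)
    have fr: "finite \<rho>'" unfolding \<rho>'_def using fS by simp
    have dj: "(S - \<rho>') \<inter> \<rho>' = {}" by blast
    from ex[rule_format, OF fr dj]
    obtain \<beta> where b: "bij \<beta>" "\<forall>a\<in>\<rho>'. \<beta> a = a" "\<beta> ` (S - \<rho>') \<inter> gsort H = {}"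
      by blast
    define H1 where "H1 = g_par ar z (g_rename ar \<beta> H)"
    have H1: "H1 \<in> ?U" unfolding H1_def using gp_ms[OF z] grn_ms[OF hh b(1)] by blast
    have "\<forall>w'\<in>?U. gsort w' = gsort w \<longrightarrow> (Q \<rho> H (g_par ar w' z) \<longleftrightarrow> Q UNIV H1 w')"
    proof (intro ballI impI)
      fix w' assume w': "w' \<in> ?U" and sw: "gsort w' = gsort w"
      have fx: "\<forall>a\<in>\<rho> \<inter> (gsort w' \<union> gsort z). \<beta> a = a" using b(2) sw unfolding \<rho>'_def S_def by simp
      have out: "\<beta> -` gsort H \<inter> (gsort w' \<union> gsort z) \<subseteq> \<rho>"
      proof
        fix s assume s: "s \<in> \<beta> -` gsort H \<inter> (gsort w' \<union> gsort z)"
        hence "s \<in> S" "\<beta> s \<in> gsort H" using sw unfolding S_def by auto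
        thus "s \<in> \<rho>" using b(3) unfolding \<rho>'_def by blast
      qed
      show "Q \<rho> H (g_par ar w' z) \<longleftrightarrow> Q UNIV H1 w'"
        unfolding Q_def H1_def using id_KL[OF w' z hh b(1) fx out] by simp
    qed
    thus ?thesis using H1 by blast
  qed
  have "hr_congruence ar ?U {\<tau>. finite \<tau>} {\<alpha>. finperm \<alpha>} E"
    unfolding hr_congruence_def
  proof (intro conjI)
    show "equiv ?U E" unfolding equiv_def
    proof (intro conjI)
      show "E \<subseteq> ?U \<times> ?U" unfolding E_def by blast
      show "refl_on ?U E" unfolding refl_on_def using mE by blast
      show "sym E" unfolding sym_def using mE by metis
      show "trans E" unfolding trans_def using mE by metis
    qed
    show "\<forall>(x,y)\<in>E. gsort x = gsort y" unfolding E_def by blast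
    show "\<forall>\<tau>\<in>{\<tau>. finite \<tau>}. \<forall>(x,y)\<in>E. (g_restrict ar \<tau> x, g_restrict ar \<tau> y) \<in> E"
    proof (intro ballI, safe)
      fix \<tau> x y assume xy: "(x,y) \<in> E"
      hence x: "x \<in> ?U" and y: "y \<in> ?U" and s: "gsort x = gsort y"
        and q: "\<forall>\<rho>. \<forall>H\<in>?U. Q \<rho> H x = Q \<rho> H y" using mE by blast+
      have "Q \<rho> H (g_restrict ar \<tau> x) = Q \<rho> H (g_restrict ar \<tau> y)" if "H \<in> ?U" for \<rho> H
        using q that unfolding Q_def by (simp add: id_restrict[OF x] id_restrict[OF y])
      moreover have "g_restrict ar \<tau> x \<in> ?U \<and> g_restrict ar \<tau> y \<in> ?U \<and> gsort (g_restrict ar \<tau> x) = gsort (g_restrict ar \<tau> y)"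
        using gr_ms[OF x] gr_ms[OF y] s by simp
      ultimately show "(g_restrict ar \<tau> x, g_restrict ar \<tau> y) \<in> E" using mE by blast
    qed
    show "\<forall>\<alpha>\<in>{\<alpha>. finperm \<alpha>}. \<forall>(x,y)\<in>E. (g_rename ar \<alpha> x, g_rename ar \<alpha> y) \<in> E"
    proof (intro ballI, safe)
      fix \<alpha> x y assume fp: "finperm \<alpha>" and xy: "(x,y) \<in> E"
      have b: "bij \<alpha>" using fp by (rule finperm_bij)
      have bi: "bij (inv \<alpha>)" using b by (rule bij_imp_bij_inv)
      from xy have x: "x \<in> ?U" and y: "y \<in> ?U" and s: "gsort x = gsort y"
        and q: "\<forall>\<rho>. \<forall>H\<in>?U. Q \<rho> H x = Q \<rho> H y" using mE by blast+
      have "Q \<rho> H (g_rename ar \<alpha> x) = Q \<rho> H (g_rename ar \<alpha> y)" if hh: "H \<in> ?U" for \<rho> H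
      proof -
        have h': "g_rename ar (inv \<alpha>) H \<in> ?U" using grn_ms[OF hh bi] by blast
        show ?thesis using q h' unfolding Q_def by (simp add: id_rename[OF x hh b] id_rename[OF y hh b])
      qed
      moreover have "g_rename ar \<alpha> x \<in> ?U \<and> g_rename ar \<alpha> y \<in> ?U \<and> gsort (g_rename ar \<alpha> x) = gsort (g_rename ar \<alpha> y)"
        using grn_ms[OF x b] grn_ms[OF y b] s by simp
      ultimately show "(g_rename ar \<alpha> x, g_rename ar \<alpha> y) \<in> E" using mE by blast
    qed
    show "\<forall>(x,y)\<in>E. \<forall>(x',y')\<in>E. (g_par ar x x', g_par ar y y') \<in> E"
    proof (safe)
      fix x y x' y' assume xy: "(x,y) \<in> E" and xy': "(x',y') \<in> E"
      from xy have x: "x \<in> ?U" and y: "y \<in> ?U" and s: "gsort x = gsort y"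
        and q: "\<forall>\<rho>. \<forall>H\<in>?U. Q \<rho> H x = Q \<rho> H y" using mE by blast+
      from xy' have x': "x' \<in> ?U" and y': "y' \<in> ?U" and s': "gsort x' = gsort y'"
        and q': "\<forall>\<rho>. \<forall>H\<in>?U. Q \<rho> H x' = Q \<rho> H y'" using mE by blast+
      have "Q \<rho> H (g_par ar x x') = Q \<rho> H (g_par ar y y')" if hh: "H \<in> ?U" for \<rho> H
      proof -
        obtain H1 where H1: "H1 \<in> ?U" "\<forall>w'\<in>?U. gsort w' = gsort x \<longrightarrow> (Q \<rho> H (g_par ar w' x') \<longleftrightarrow> Q UNIV H1 w')"
          using KL[OF x x' hh] by blast
        obtain H2 where H2: "H2 \<in> ?U" "\<forall>w'\<in>?U. gsort w' = gsort x' \<longrightarrow> (Q \<rho> H (g_par ar w' y) \<longleftrightarrow> Q UNIV H2 w')"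
          using KL[OF x' y hh] by blast
        have "Q \<rho> H (g_par ar x x') = Q UNIV H1 x" using H1(2) x by blast
        also have "\<dots> = Q UNIV H1 y" using q H1(1) by blast
        also have "\<dots> = Q \<rho> H (g_par ar y x')" using H1(2) y s by simp
        also have "\<dots> = Q \<rho> H (g_par ar x' y)" by (simp add: id_comm[OF y x'])
        also have "\<dots> = Q UNIV H2 x'" using H2(2) x' by blast
        also have "\<dots> = Q UNIV H2 y'" using q' H2(1) by blast
        also have "\<dots> = Q \<rho> H (g_par ar y' y)" using H2(2) y' s' by simp
        also have "\<dots> = Q \<rho> H (g_par ar y y')" by (simp add: id_comm[OF y y'])
        finally show ?thesis .
      qed
      moreover have "g_par ar x x' \<in> ?U \<and> g_par ar y y' \<in> ?U \<and> gsort (g_par ar x x') = gsort (g_par ar y y')"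
        using gp_ms[OF x x'] gp_ms[OF y y'] s s' by simp
      ultimately show "(g_par ar x x', g_par ar y y') \<in> E" using mE by blast
    qed
    show "\<forall>\<sigma>. finite ({x\<in>?U. gsort x = \<sigma>} // E)"
    proof
      fix \<sigma> :: "nat set"
      show "finite ({x\<in>?U. gsort x = \<sigma>} // E)"
      proof (cases "finite \<sigma>")
        case False
        hence e: "{x\<in>?U. gsort x = \<sigma>} = {}" using gs_fin by blast
        show ?thesis unfolding e by (simp add: quotient_def)
      next
        case True
        define U\<sigma> where "U\<sigma> = {x\<in>?U. gsort x \<subseteq> \<sigma>}"
        obtain R where hR: "hr_congruence ar U\<sigma> (Pow \<sigma>) {\<alpha>. finperm \<alpha> \<and> (\<forall>s. s \<notin> \<sigma> \<longrightarrow> \<alpha> s = s)} R"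
          and sat: "\<forall>(x,y)\<in>R. x \<in> L \<longrightarrow> y \<in> L"
          using h True unfolding recognizable_Gtau_def recognizable_in_def U\<sigma>_def by blast
        note hh = hR[unfolded hr_congruence_def]
        have eR: "equiv U\<sigma> R" using hh by (rule conjunct1)
        have sR: "\<forall>(x,y)\<in>R. gsort x = gsort y" using hh by (elim conjE)
        have rR: "\<forall>\<tau>\<in>Pow \<sigma>. \<forall>(x,y)\<in>R. (g_restrict ar \<tau> x, g_restrict ar \<tau> y) \<in> R" using hh by (elim conjE)
        have pR: "\<forall>(x,y)\<in>R. \<forall>(x',y')\<in>R. (g_par ar x x', g_par ar y y') \<in> R" using hh by (elim conjE)
        have fR: "\<forall>\<sigma>'. finite ({x\<in>U\<sigma>. gsort x = \<sigma>'} // R)" using hh by (elim conjE)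
        have RU: "R \<subseteq> U\<sigma> \<times> U\<sigma>" and rfR: "refl_on U\<sigma> R" and syR: "sym R"
          using eR by (simp_all add: equiv_def)
        define A where "A = {x\<in>?U. gsort x = \<sigma>}"
        have A': "{x\<in>U\<sigma>. gsort x = \<sigma>} = A" unfolding A_def U\<sigma>_def by auto
        have eE: "equiv ?U E" unfolding equiv_def
        proof (intro conjI)
          show "E \<subseteq> ?U \<times> ?U" unfolding E_def by blast
          show "refl_on ?U E" unfolding refl_on_def using mE by blast
          show "sym E" unfolding sym_def using mE by metis
          show "trans E" unfolding trans_def using mE by metis
        qed
        have sub: "\<forall>x\<in>A. \<forall>y\<in>A. (x,y)\<in>R \<longrightarrow> (x,y)\<in>E"
        proof (intro ballI impI)
          fix x y assume x: "x \<in> A" and y: "y \<in> A" and xy: "(x,y) \<in> R"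
          have xU: "x \<in> ?U" "gsort x = \<sigma>" and yU: "y \<in> ?U" "gsort y = \<sigma>" using x y unfolding A_def by auto
          have "Q \<rho> H x = Q \<rho> H y" if hU: "H \<in> ?U" for \<rho> H
          proof -
            have hs: "g_restrict ar \<sigma> H \<in> U\<sigma>" using gr_ms[OF hU] unfolding U\<sigma>_def by auto
            have "(g_restrict ar \<sigma> H, g_restrict ar \<sigma> H) \<in> R" using rfR hs by (simp add: refl_on_def)
            moreover have "(g_restrict ar (\<rho> \<inter> \<sigma>) x, g_restrict ar (\<rho> \<inter> \<sigma>) y) \<in> R" using rR xy by blast
            ultimately have "(g_par ar (g_restrict ar (\<rho> \<inter> \<sigma>) x) (g_restrict ar \<sigma> H),
                g_par ar (g_restrict ar (\<rho> \<inter> \<sigma>) y) (g_restrict ar \<sigma> H)) \<in> R" using pR by blast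
            hence r: "(g_restrict ar {} (g_par ar (g_restrict ar (\<rho> \<inter> \<sigma>) x) (g_restrict ar \<sigma> H)),
                g_restrict ar {} (g_par ar (g_restrict ar (\<rho> \<inter> \<sigma>) y) (g_restrict ar \<sigma> H))) \<in> R" using rR by blast
            have r': "(g_restrict ar {} (g_par ar (g_restrict ar (\<rho> \<inter> \<sigma>) y) (g_restrict ar \<sigma> H)),
                g_restrict ar {} (g_par ar (g_restrict ar (\<rho> \<inter> \<sigma>) x) (g_restrict ar \<sigma> H))) \<in> R"
              using r syR by (simp add: sym_def)
            show ?thesis unfolding Q_def
              using id_fin[OF xU(1) hU, of \<sigma> \<rho>] id_fin[OF yU(1) hU, of \<sigma> \<rho>] xU(2) yU(2) sat r r' by auto
          qed
          thus "(x,y) \<in> E" using mE xU yU by blast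
        qed
        have cl: "\<forall>x\<in>A. R``{x} \<subseteq> A"
        proof (intro ballI subsetI)
          fix x y assume x: "x \<in> A" and "y \<in> R``{x}"
          hence xy: "(x,y) \<in> R" by simp
          hence "y \<in> U\<sigma>" using RU by blast
          moreover have "gsort y = \<sigma>" using sR xy x unfolding A_def by auto
          ultimately show "y \<in> A" unfolding A_def U\<sigma>_def by simp
        qed
        have AB: "A \<subseteq> U\<sigma>" unfolding A_def U\<sigma>_def by auto
        have "finite (A // R)" using fR A' by metis
        hence "finite (A // E)" by (rule quot_fin[OF eR eE AB cl sub])
        thus ?thesis unfolding A_def .
      qed
    qed
  qed
  moreover have "\<forall>(x,y)\<in>E. x \<in> L \<longrightarrow> y \<in> L"
  proof (safe)
    fix x y assume xy: "(x,y) \<in> E" and xL: "x \<in> L"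
    from xy have x: "x \<in> ?U" and y: "y \<in> ?U" and s: "gsort x = gsort y"
      and q: "\<forall>\<rho>. \<forall>H\<in>?U. Q \<rho> H x = Q \<rho> H y" using mE by blast+
    have sx: "gsort x = {}" using L0 xL by blast
    hence sy: "gsort y = {}" using s by simp
    have E0U: "iso_class ar E0 \<in> ?U" using wf_E0 by (rule graphsI)
    have "Q {} (iso_class ar E0) x" unfolding Q_def using id_sat[OF x sx] xL by simp
    hence "Q {} (iso_class ar E0) y" using q E0U by blast
    thus "y \<in> L" unfolding Q_def using id_sat[OF y sy] by simp
  qed
  ultimately show ?thesis unfolding recognizable_G_def recognizable_in_def using LU by blast
qed

theorem theorem7p4:
  fixes ar :: "'a::finite \<Rightarrow> nat" and L :: "'a cgraph set set"
  assumes "\<forall>a. ar a \<ge> 1"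
    and "L \<subseteq> graphs ar"
    and "\<forall>x\<in>L. gsort x = {}"
  shows "recognizable_G ar L \<longleftrightarrow> (\<forall>\<tau>. finite \<tau> \<longrightarrow> recognizable_Gtau ar \<tau> L)"
  using fwd[OF assms(2,3)] bwd[OF assms(2,3)] by blast

end
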